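(* Let $V$ be a finite-dimensional real vector space with a nondegenerate symmetric bilinear form $b$, and let $J\in PC(V)$ be a metric-$b$ algebraic Jacobi curvature operator. Put $G(x)=1_V-\tfrac13J(x,x)$ for $x\in V$, let $U_J=\{x\in V:G(x)\text{ invertible}\}$ (an open set containing $0$), and define $g_x(u,v)=b(G(x)u,v)$ on $U_J$. Then $g$ is a semi-Riemannian metric on $U_J$ with $g_0=b$, its Levi-Civita connection is $$(\nabla^g_uv)(x)=(D_uv)(x)+\tfrac23\,G(x)^{-1}J(u(x),v(x))x,$$ and its Riemann and Jacobi curvature operators at $0$ satisfy $\mathcal R_{\nabla^g}(0)=R_J$ and $\mathcal J_{\nabla^g}(0)=J$.
   Context: $PC(V)$: bilinear maps $V\times V\to L(V;V)$. $J$ is a metric-$b$ algebraic Jacobi curvature operator if $J(u,v)=J(v,u)$, $J(u,v)w+J(v,w)u+J(w,u)v=0$, and $b(J(u,v)w,x)=b(J(w,x)u,v)$ for all $u,v,w,x$. $D$ is ordinary differentiation of $V$-valued functions (vector fields on open subsets of $V$). Curvature: $\mathcal R_\nabla(u,v)=[\nabla_u,\nabla_v]-\nabla_{[u,v]}$; $R_J(u,v)w=\tfrac23(J(w,v)u-J(w,u)v)$; Jacobi operator $\mathcal J_\nabla(u,v)w=\tfrac12(\mathcal R_\nabla(w,v)u+\mathcal R_\nabla(w,u)v)$. *)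

theory Defs
  imports "HOL-Analysis.Analysis"
begin

fun Ck_on :: "nat \<Rightarrow> 'a::real_normed_vector set \<Rightarrow> ('a \<Rightarrow> 'b::real_normed_vector) \<Rightarrow> bool" where
  "Ck_on 0 U f = continuous_on U f"
| "Ck_on (Suc n) U f =
     (f differentiable_on U \<and> (\<forall>h. Ck_on n U (\<lambda>x. frechet_derivative f (at x) h)))"

definition smooth_fn_on :: "'a::real_normed_vector set \<Rightarrow> ('a \<Rightarrow> 'b::real_normed_vector) \<Rightarrow> bool" where
  "smooth_fn_on U f \<longleftrightarrow> (\<forall>n. Ck_on n U f)"

definition Dir :: "('a::real_normed_vector \<Rightarrow> 'b::real_normed_vector) \<Rightarrow> 'a \<Rightarrow> 'a \<Rightarrow> 'b" where
  "Dir f x a = frechet_derivative f (at x) a"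

definition Dflat :: "('v::real_normed_vector \<Rightarrow> 'v) \<Rightarrow> ('v \<Rightarrow> 'v) \<Rightarrow> 'v \<Rightarrow> 'v" where
  "Dflat u v x = Dir v x (u x)"

definition lie :: "('v::real_normed_vector \<Rightarrow> 'v) \<Rightarrow> ('v \<Rightarrow> 'v) \<Rightarrow> 'v \<Rightarrow> 'v" where
  "lie u v x = Dflat u v x - Dflat v u x"

definition sym_form :: "('v \<Rightarrow> 'v \<Rightarrow> real) \<Rightarrow> bool" where
  "sym_form q \<longleftrightarrow> (\<forall>u v. q u v = q v u)"

definition nondegenerate :: "('v::real_vector \<Rightarrow> 'v \<Rightarrow> real) \<Rightarrow> bool" where
  "nondegenerate q \<longleftrightarrow> (\<forall>u. (\<forall>v. q u v = 0) \<longrightarrow> u = 0)"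

definition neg_index :: "('v::euclidean_space \<Rightarrow> 'v \<Rightarrow> real) \<Rightarrow> nat" where
  "neg_index q = Max {dim W | W. subspace W \<and> (\<forall>w\<in>W. w \<noteq> 0 \<longrightarrow> q w w < 0)}"

text \<open>J u v w stands for J(u,v)w: bilinear in (u,v), linear in w.\<close>
definition PC :: "('v::real_vector \<Rightarrow> 'v \<Rightarrow> 'v \<Rightarrow> 'v) \<Rightarrow> bool" where
  "PC J \<longleftrightarrow> (\<forall>u v. linear (J u v)) \<and> (\<forall>w. bilinear (\<lambda>u v. J u v w))"

definition metric_jacobi :: "('v::real_vector \<Rightarrow> 'v \<Rightarrow> real) \<Rightarrow> ('v \<Rightarrow> 'v \<Rightarrow> 'v \<Rightarrow> 'v) \<Rightarrow> bool" where
  "metric_jacobi b J \<longleftrightarrow> PC J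
     \<and> (\<forall>u v. J u v = J v u)
     \<and> (\<forall>u v w. J u v w + J v w u + J w u v = 0)
     \<and> (\<forall>u v w x. b (J u v w) x = b (J w x u) v)"

definition R_J :: "('v::real_vector \<Rightarrow> 'v \<Rightarrow> 'v \<Rightarrow> 'v) \<Rightarrow> 'v \<Rightarrow> 'v \<Rightarrow> 'v \<Rightarrow> 'v" where
  "R_J J u v w = (2/3) *\<^sub>R (J w v u - J w u v)"

definition semi_riemannian_on ::
  "'v::euclidean_space set \<Rightarrow> ('v \<Rightarrow> 'v \<Rightarrow> 'v \<Rightarrow> real) \<Rightarrow> bool" where
  "semi_riemannian_on U g \<longleftrightarrow> open U
     \<and> (\<forall>x\<in>U. bilinear (g x) \<and> sym_form (g x) \<and> nondegenerate (g x))
     \<and> (\<forall>u v. smooth_fn_on U (\<lambda>x. g x u v))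
     \<and> (\<forall>x\<in>U. \<exists>e>0. \<forall>y\<in>U \<inter> ball x e. neg_index (g y) = neg_index (g x))"

definition vfields :: "'v::euclidean_space set \<Rightarrow> ('v \<Rightarrow> 'v) set" where
  "vfields U = {u. smooth_fn_on U u}"

definition sfuns :: "'v::euclidean_space set \<Rightarrow> ('v \<Rightarrow> real) set" where
  "sfuns U = {f. smooth_fn_on U f}"

definition affine_connection ::
  "'v::euclidean_space set \<Rightarrow> (('v \<Rightarrow> 'v) \<Rightarrow> ('v \<Rightarrow> 'v) \<Rightarrow> 'v \<Rightarrow> 'v) \<Rightarrow> bool" where
  "affine_connection U nabla \<longleftrightarrow>
     (\<forall>u\<in>vfields U. \<forall>v\<in>vfields U. smooth_fn_on U (nabla u v))
   \<and> (\<forall>u\<in>vfields U. \<forall>w\<in>vfields U. \<forall>v\<in>vfields U. \<forall>x\<in>U.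
        nabla (\<lambda>y. u y + w y) v x = nabla u v x + nabla w v x
      \<and> nabla u (\<lambda>y. v y + w y) x = nabla u v x + nabla u w x)
   \<and> (\<forall>f\<in>sfuns U. \<forall>u\<in>vfields U. \<forall>v\<in>vfields U. \<forall>x\<in>U.
        nabla (\<lambda>y. f y *\<^sub>R u y) v x = f x *\<^sub>R nabla u v x
      \<and> nabla u (\<lambda>y. f y *\<^sub>R v y) x = Dir f x (u x) *\<^sub>R v x + f x *\<^sub>R nabla u v x)"

definition levi_civita ::
  "'v::euclidean_space set \<Rightarrow> ('v \<Rightarrow> 'v \<Rightarrow> 'v \<Rightarrow> real)
     \<Rightarrow> (('v \<Rightarrow> 'v) \<Rightarrow> ('v \<Rightarrow> 'v) \<Rightarrow> 'v \<Rightarrow> 'v) \<Rightarrow> bool" where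
  "levi_civita U g nabla \<longleftrightarrow> affine_connection U nabla
   \<and> (\<forall>u\<in>vfields U. \<forall>v\<in>vfields U. \<forall>x\<in>U. nabla u v x - nabla v u x = lie u v x)
   \<and> (\<forall>u\<in>vfields U. \<forall>v\<in>vfields U. \<forall>w\<in>vfields U. \<forall>x\<in>U.
        Dir (\<lambda>y. g y (v y) (w y)) x (u x) = g x (nabla u v x) (w x) + g x (v x) (nabla u w x))"

definition curv ::
  "(('v::real_normed_vector \<Rightarrow> 'v) \<Rightarrow> ('v \<Rightarrow> 'v) \<Rightarrow> 'v \<Rightarrow> 'v)
     \<Rightarrow> ('v \<Rightarrow> 'v) \<Rightarrow> ('v \<Rightarrow> 'v) \<Rightarrow> ('v \<Rightarrow> 'v) \<Rightarrow> 'v \<Rightarrow> 'v" where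
  "curv nabla u v w x = nabla u (nabla v w) x - nabla v (nabla u w) x - nabla (lie u v) w x"

definition jacobi_op ::
  "(('v::real_normed_vector \<Rightarrow> 'v) \<Rightarrow> ('v \<Rightarrow> 'v) \<Rightarrow> 'v \<Rightarrow> 'v)
     \<Rightarrow> ('v \<Rightarrow> 'v) \<Rightarrow> ('v \<Rightarrow> 'v) \<Rightarrow> ('v \<Rightarrow> 'v) \<Rightarrow> 'v \<Rightarrow> 'v" where
  "jacobi_op nabla u v w x = (1/2) *\<^sub>R (curv nabla w v u x + curv nabla w u v x)"

definition Gop :: "('v::real_vector \<Rightarrow> 'v \<Rightarrow> 'v \<Rightarrow> 'v) \<Rightarrow> 'v \<Rightarrow> 'v \<Rightarrow> 'v" where
  "Gop J x = (\<lambda>u. u - (1/3) *\<^sub>R J x x u)"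

definition U_J :: "('v::real_vector \<Rightarrow> 'v \<Rightarrow> 'v \<Rightarrow> 'v) \<Rightarrow> 'v set" where
  "U_J J = {x. bij (Gop J x)}"

definition gJ :: "('v::real_vector \<Rightarrow> 'v \<Rightarrow> real) \<Rightarrow> ('v \<Rightarrow> 'v \<Rightarrow> 'v \<Rightarrow> 'v) \<Rightarrow> 'v \<Rightarrow> 'v \<Rightarrow> 'v \<Rightarrow> real" where
  "gJ b J x u v = b (Gop J x u) v"

definition nablaJ ::
  "('v::real_normed_vector \<Rightarrow> 'v \<Rightarrow> 'v \<Rightarrow> 'v) \<Rightarrow> ('v \<Rightarrow> 'v) \<Rightarrow> ('v \<Rightarrow> 'v) \<Rightarrow> 'v \<Rightarrow> 'v" where
  "nablaJ J u v x = Dflat u v x + (2/3) *\<^sub>R inv (Gop J x) (J (u x) (v x) x)"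

end

theory Submission
  imports Defs
begin

lemma fd_apply: "(f has_derivative f') (at x) \<Longrightarrow> frechet_derivative f (at x) h = f' h"
  using frechet_derivative_at by metis

lemma Ck_cong:
  assumes "open U" "\<And>x. x \<in> U \<Longrightarrow> f x = g x" "Ck_on n U f"
  shows "Ck_on n U g"
  using assms
proof (induction n arbitrary: f g)
  case 0
  then show ?case using continuous_on_cong by (metis Ck_on.simps(1))
next
  case (Suc n)
  from Suc.prems have d: "f differentiable_on U" and c: "\<And>h. Ck_on n U (\<lambda>x. frechet_derivative f (at x) h)" by auto
  have dg: "g differentiable_on U"
    using d Suc.prems(1,2) unfolding differentiable_on_eq_differentiable_at[OF Suc.prems(1)] differentiable_def
    by (meson has_derivative_transform_within_open)
  have "Ck_on n U (\<lambda>x. frechet_derivative g (at x) h)" for h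
  proof (rule Suc.IH[OF Suc.prems(1) _ c[of h]])
    fix x assume "x \<in> U"
    then show "frechet_derivative f (at x) h = frechet_derivative g (at x) h"
      using frechet_derivative_transform_within_open[of f x U g] d Suc.prems(1,2)
      unfolding differentiable_on_eq_differentiable_at[OF Suc.prems(1)] by auto
  qed
  then show ?case using dg by simp
qed

lemma Ck_mono: "Ck_on (Suc n) U f \<Longrightarrow> Ck_on n U f"
proof (induction n arbitrary: f)
  case 0
  then show ?case by (simp add: differentiable_imp_continuous_on)
next
  case (Suc n)
  then show ?case by (metis Ck_on.simps(2))
qed

lemma Ck_mono_le: "Ck_on m U f \<Longrightarrow> n \<le> m \<Longrightarrow> Ck_on n U f"
proof (induction m)
  case 0 then show ?case by simp
next
  case (Suc m)
  show ?case
  proof (cases "n \<le> m")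
    case True then show ?thesis using Suc Ck_mono by blast
  next
    case False then have "n = Suc m" using Suc by simp
    then show ?thesis using Suc by simp
  qed
qed

lemma Ck_cont: "Ck_on n U f \<Longrightarrow> continuous_on U f"
  using Ck_mono_le[of n U f 0] by simp

lemma Ck_diff: "Ck_on (Suc n) U f \<Longrightarrow> open U \<Longrightarrow> x \<in> U \<Longrightarrow> (f has_derivative frechet_derivative f (at x)) (at x)"
  by (simp add: differentiable_on_eq_differentiable_at frechet_derivative_works)

lemma Ck_const: "Ck_on n U (\<lambda>x. c)"
  by (induction n arbitrary: c) auto

lemma Ck_add:
  assumes U: "open U"
  shows "Ck_on n U f \<Longrightarrow> Ck_on n U g \<Longrightarrow> Ck_on n U (\<lambda>x. f x + g x)"
proof (induction n arbitrary: f g)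
  case 0
  then show ?case by (simp add: continuous_on_add)
next
  case (Suc n)
  have df: "\<And>x. x \<in> U \<Longrightarrow> (f has_derivative frechet_derivative f (at x)) (at x)"
   and dg: "\<And>x. x \<in> U \<Longrightarrow> (g has_derivative frechet_derivative g (at x)) (at x)"
    using Ck_diff[OF Suc.prems(1) U] Ck_diff[OF Suc.prems(2) U] by auto
  have D: "\<And>x. x \<in> U \<Longrightarrow> ((\<lambda>x. f x + g x) has_derivative
     (\<lambda>h. frechet_derivative f (at x) h + frechet_derivative g (at x) h)) (at x)"
    using has_derivative_add[OF df dg] by blast
  have "(\<lambda>x. f x + g x) differentiable_on U"
    using D U by (auto simp: differentiable_on_eq_differentiable_at differentiable_def)
  moreover have "Ck_on n U (\<lambda>x. frechet_derivative (\<lambda>x. f x + g x) (at x) h)" for h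
  proof (rule Ck_cong[OF U])
    show "Ck_on n U (\<lambda>x. frechet_derivative f (at x) h + frechet_derivative g (at x) h)"
      using Suc.IH Suc.prems by simp
    show "\<And>x. x \<in> U \<Longrightarrow> frechet_derivative f (at x) h + frechet_derivative g (at x) h =
        frechet_derivative (\<lambda>x. f x + g x) (at x) h"
      by (simp add: fd_apply[OF D])
  qed
  ultimately show ?case by simp
qed

lemma Ck_bilinear:
  assumes B: "bounded_bilinear B" and U: "open U"
  shows "Ck_on n U f \<Longrightarrow> Ck_on n U g \<Longrightarrow> Ck_on n U (\<lambda>x. B (f x) (g x))"
proof (induction n arbitrary: f g)
  case 0
  then show ?case using bounded_bilinear.continuous_on[OF B] by simp
next
  case (Suc n)
  have df: "\<And>x. x \<in> U \<Longrightarrow> (f has_derivative frechet_derivative f (at x)) (at x)"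
   and dg: "\<And>x. x \<in> U \<Longrightarrow> (g has_derivative frechet_derivative g (at x)) (at x)"
    using Ck_diff[OF Suc.prems(1) U] Ck_diff[OF Suc.prems(2) U] by auto
  have D: "\<And>x. x \<in> U \<Longrightarrow> ((\<lambda>x. B (f x) (g x)) has_derivative
     (\<lambda>h. B (f x) (frechet_derivative g (at x) h) + B (frechet_derivative f (at x) h) (g x))) (at x)"
    using bounded_bilinear.FDERIV[OF B df dg] by blast
  have "(\<lambda>x. B (f x) (g x)) differentiable_on U"
    using D U by (auto simp: differentiable_on_eq_differentiable_at differentiable_def)
  moreover have "Ck_on n U (\<lambda>x. frechet_derivative (\<lambda>x. B (f x) (g x)) (at x) h)" for h
  proof (rule Ck_cong[OF U])
    have a: "Ck_on n U (\<lambda>x. B (f x) (frechet_derivative g (at x) h))"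
      using Suc.IH[OF Ck_mono[OF Suc.prems(1)]] Suc.prems(2) by simp
    have b: "Ck_on n U (\<lambda>x. B (frechet_derivative f (at x) h) (g x))"
      using Suc.IH[OF _ Ck_mono[OF Suc.prems(2)]] Suc.prems(1) by simp
    show "Ck_on n U (\<lambda>x. B (f x) (frechet_derivative g (at x) h) + B (frechet_derivative f (at x) h) (g x))"
      using Ck_add[OF U a b] .
    show "\<And>x. x \<in> U \<Longrightarrow> B (f x) (frechet_derivative g (at x) h) + B (frechet_derivative f (at x) h) (g x) =
        frechet_derivative (\<lambda>x. B (f x) (g x)) (at x) h"
      by (simp add: fd_apply[OF D])
  qed
  ultimately show ?case by simp
qed

lemma Ck_linear:
  assumes L: "bounded_linear L" and U: "open U"
  shows "Ck_on n U f \<Longrightarrow> Ck_on n U (\<lambda>x. L (f x))"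
proof (induction n arbitrary: f)
  case 0
  then show ?case using L by (simp add: bounded_linear.continuous_on)
next
  case (Suc n)
  have df: "\<And>x. x \<in> U \<Longrightarrow> (f has_derivative frechet_derivative f (at x)) (at x)"
    using Ck_diff[OF Suc.prems(1) U] by auto
  have D: "\<And>x. x \<in> U \<Longrightarrow> ((\<lambda>x. L (f x)) has_derivative
     (\<lambda>h. L (frechet_derivative f (at x) h))) (at x)"
    using bounded_linear.has_derivative[OF L df] by blast
  have "(\<lambda>x. L (f x)) differentiable_on U"
    using D U by (auto simp: differentiable_on_eq_differentiable_at differentiable_def)
  moreover have "Ck_on n U (\<lambda>x. frechet_derivative (\<lambda>x. L (f x)) (at x) h)" for h
  proof (rule Ck_cong[OF U])
    show "Ck_on n U (\<lambda>x. L (frechet_derivative f (at x) h))"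
      using Suc.IH Suc.prems by simp
    show "\<And>x. x \<in> U \<Longrightarrow> L (frechet_derivative f (at x) h) =
        frechet_derivative (\<lambda>x. L (f x)) (at x) h"
      by (simp add: fd_apply[OF D])
  qed
  ultimately show ?case by simp
qed

lemma Ck_id: "open U \<Longrightarrow> Ck_on n U (\<lambda>x. x)"
proof (induction n)
  case 0 then show ?case by (simp add: continuous_on_id)
next
  case (Suc n)
  then show ?case by (simp add: Ck_const differentiable_on_id)
qed

lemma Ck_sum:
  assumes U: "open U" and S: "finite S"
  shows "(\<And>i. i \<in> S \<Longrightarrow> Ck_on n U (f i)) \<Longrightarrow> Ck_on n U (\<lambda>x. \<Sum>i\<in>S. f i x)"
  using S
proof (induction S rule: finite_induct)
  case empty then show ?case by (simp add: Ck_const)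
next
  case (insert a F)
  have 1: "Ck_on n U (f a)" using insert by simp
  have 2: "Ck_on n U (\<lambda>x. \<Sum>i\<in>F. f i x)" using insert by simp
  show ?case using Ck_add[OF U 1 2] insert by simp
qed

lemma Ck_scaleR: "open U \<Longrightarrow> Ck_on n U f \<Longrightarrow> Ck_on n U g \<Longrightarrow> Ck_on n U (\<lambda>x. f x *\<^sub>R g x)"
  using Ck_bilinear[OF bounded_bilinear_scaleR] by blast

lemma Ck_mult: "open U \<Longrightarrow> Ck_on n U f \<Longrightarrow> Ck_on n U g \<Longrightarrow> Ck_on n U (\<lambda>x. f x * (g x :: real))"
  using Ck_bilinear[OF bounded_bilinear_mult] by blast

lemma Ck_inner: "open U \<Longrightarrow> Ck_on n U f \<Longrightarrow> Ck_on n U g \<Longrightarrow> Ck_on n U (\<lambda>x. f x \<bullet> g x)"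
  using Ck_bilinear[OF bounded_bilinear_inner] by blast

lemma Ck_cmul: "open U \<Longrightarrow> Ck_on n U g \<Longrightarrow> Ck_on n U (\<lambda>x. c *\<^sub>R g x)"
  using Ck_scaleR[OF _ Ck_const] by blast

lemma Ck_diff_fun: "open U \<Longrightarrow> Ck_on n U f \<Longrightarrow> Ck_on n U g \<Longrightarrow> Ck_on n U (\<lambda>x. f x - g x)"
proof -
  assume U: "open U" and f: "Ck_on n U f" and g: "Ck_on n U g"
  have "Ck_on n U (\<lambda>x. f x + (-1) *\<^sub>R g x)" using Ck_add[OF U f Ck_cmul[OF U g]] .
  then show ?thesis by simp
qed

lemma Ck_deriv: "Ck_on (Suc n) U f \<Longrightarrow> Ck_on n U (\<lambda>x. frechet_derivative f (at x) h)"
  by simp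

lemma lin_expand:
  fixes f :: "'a::euclidean_space \<Rightarrow> 'b::real_vector"
  assumes "linear f" shows "f h = (\<Sum>i\<in>Basis. (h \<bullet> i) *\<^sub>R f i)"
proof -
  have "f h = f (\<Sum>i\<in>Basis. (h \<bullet> i) *\<^sub>R i)" by (simp add: euclidean_representation)
  also have "\<dots> = (\<Sum>i\<in>Basis. (h \<bullet> i) *\<^sub>R f i)"
    using assms by (simp add: linear_sum linear_scale)
  finally show ?thesis .
qed

locale mj =
  fixes b :: "'v::euclidean_space \<Rightarrow> 'v \<Rightarrow> real" and J :: "'v \<Rightarrow> 'v \<Rightarrow> 'v \<Rightarrow> 'v"
  assumes bb: "bilinear b" and sb: "sym_form b" and nb: "nondegenerate b" and mjJ: "metric_jacobi b J"
begin

lemma J_lin: "linear (J u v)" using mjJ unfolding metric_jacobi_def PC_def by blast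
lemma J_bil: "bilinear (\<lambda>u v. J u v w)" using mjJ unfolding metric_jacobi_def PC_def by blast
lemma J_sym: "J u v = J v u" using mjJ unfolding metric_jacobi_def by blast
lemma J_bianchi: "J u v w + J v w u + J w u v = 0" using mjJ unfolding metric_jacobi_def by blast
lemma J_metric: "b (J u v w) x = b (J w x u) v" using mjJ unfolding metric_jacobi_def by blast

lemma J_add1: "J (a + a') c d = J a c d + J a' c d" using bilinear_ladd[OF J_bil] by fast
lemma J_add2: "J a (c + c') d = J a c d + J a c' d" using bilinear_radd[OF J_bil] by fast
lemma J_add3: "J a c (d + d') = J a c d + J a c d'" using J_lin linear_add by blast
lemma J_scale1: "J (r *\<^sub>R a) c d = r *\<^sub>R J a c d" using bilinear_lmul[OF J_bil] by fast
lemma J_scale2: "J a (r *\<^sub>R c) d = r *\<^sub>R J a c d" using bilinear_rmul[OF J_bil] by fast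
lemma J_scale3: "J a c (r *\<^sub>R d) = r *\<^sub>R J a c d" using J_lin linear_scale by blast
lemma J_sub1: "J (a - a') c d = J a c d - J a' c d" using bilinear_lsub[OF J_bil] by fast
lemma J_sub2: "J a (c - c') d = J a c d - J a c' d" using bilinear_rsub[OF J_bil] by fast
lemma J_sub3: "J a c (d - d') = J a c d - J a c d'" using J_lin linear_diff by blast
lemma J_zero1[simp]: "J 0 c d = 0" using bilinear_lzero[OF J_bil] by fast
lemma J_zero2[simp]: "J a 0 d = 0" using bilinear_rzero[OF J_bil] by fast
lemma J_zero3[simp]: "J a c 0 = 0" using J_lin linear_0 by blast
lemma J_neg3: "J a c (- d) = - J a c d" using J_lin linear_neg by blast

lemma b_add1: "b (a + a') c = b a c + b a' c" using bilinear_ladd[OF bb] by fast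
lemma b_add2: "b a (c + c') = b a c + b a c'" using bilinear_radd[OF bb] by fast
lemma b_scale1: "b (r *\<^sub>R a) c = r * b a c" using bilinear_lmul[OF bb] by fastforce
lemma b_scale2: "b a (r *\<^sub>R c) = r * b a c" using bilinear_rmul[OF bb] by fastforce
lemma b_sub1: "b (a - a') c = b a c - b a' c" using bilinear_lsub[OF bb] by fast
lemma b_sub2: "b a (c - c') = b a c - b a c'" using bilinear_rsub[OF bb] by fast
lemma b_sym: "b u v = b v u" using sb by (simp add: sym_form_def)

lemma J_expand: "J a c d = (\<Sum>i\<in>Basis. \<Sum>j\<in>Basis. ((a \<bullet> i) * (c \<bullet> j)) *\<^sub>R J i j d)"
proof -
  have "J a c d = J (\<Sum>i\<in>Basis. (a \<bullet> i) *\<^sub>R i) (\<Sum>j\<in>Basis. (c \<bullet> j) *\<^sub>R j) d"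
    by (simp add: euclidean_representation)
  also have "\<dots> = (\<Sum>(i,j)\<in>Basis \<times> Basis. J ((a \<bullet> i) *\<^sub>R i) ((c \<bullet> j) *\<^sub>R j) d)"
    using bilinear_sum[OF J_bil, of "\<lambda>i. (a \<bullet> i) *\<^sub>R i" Basis "\<lambda>j. (c \<bullet> j) *\<^sub>R j" Basis] by simp
  also have "\<dots> = (\<Sum>(i,j)\<in>Basis \<times> Basis. ((a \<bullet> i) * (c \<bullet> j)) *\<^sub>R J i j d)"
    by (simp add: J_scale1 J_scale2 mult.commute)
  also have "\<dots> = (\<Sum>i\<in>Basis. \<Sum>j\<in>Basis. ((a \<bullet> i) * (c \<bullet> j)) *\<^sub>R J i j d)"
    by (simp add: sum.cartesian_product)
  finally show ?thesis .
qed

lemma Ck_J: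
  assumes U: "open U" and p: "Ck_on n U p" and q: "Ck_on n U q" and r: "Ck_on n U r"
  shows "Ck_on n U (\<lambda>x. J (p x) (q x) (r x))"
proof -
  have "Ck_on n U (\<lambda>x. \<Sum>i\<in>Basis. \<Sum>j\<in>Basis. ((p x \<bullet> i) * (q x \<bullet> j)) *\<^sub>R J i j (r x))"
  proof (intro Ck_sum[OF U] finite_Basis)
    fix i j :: 'v
    have li: "bounded_linear (J i j)" using J_lin linear_conv_bounded_linear by blast
    show "Ck_on n U (\<lambda>x. ((p x \<bullet> i) * (q x \<bullet> j)) *\<^sub>R J i j (r x))"
      by (intro Ck_scaleR[OF U] Ck_mult[OF U] Ck_inner[OF U] Ck_linear[OF li U] p q r Ck_const)
  qed
  then show ?thesis by (simp add: J_expand[symmetric])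
qed

lemma J_bound: "\<exists>K>0. \<forall>a c d. norm (J a c d) \<le> K * norm a * norm c * norm d"
proof -
  define S where "S = (\<Sum>i\<in>(Basis::'v set). \<Sum>j\<in>(Basis::'v set). onorm (J i j))"
  have li: "bounded_linear (J i j)" for i j using J_lin linear_conv_bounded_linear by blast
  have op: "0 \<le> onorm (J i j)" for i j using onorm_pos_le[OF li] .
  have S0: "0 \<le> S" unfolding S_def by (intro sum_nonneg op)
  have "norm (J a c d) \<le> (1 + S) * norm a * norm c * norm d" for a c d
  proof -
    have e1: "norm (J a c d) \<le> (\<Sum>i\<in>Basis. norm (\<Sum>j\<in>Basis. ((a \<bullet> i) * (c \<bullet> j)) *\<^sub>R J i j d))"
      unfolding J_expand[of a c d] by (rule norm_sum)
    have e2: "norm (\<Sum>j\<in>Basis. ((a \<bullet> i) * (c \<bullet> j)) *\<^sub>R J i j d) \<le> (\<Sum>j\<in>Basis. (norm a * norm c * norm d) * onorm (J i j))"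
      if i: "i \<in> Basis" for i
    proof (rule order_trans[OF norm_sum], rule sum_mono)
      fix j :: 'v assume j: "j \<in> Basis"
      have A: "\<bar>a \<bullet> i\<bar> \<le> norm a" using Basis_le_norm i by auto
      have C: "\<bar>c \<bullet> j\<bar> \<le> norm c" using Basis_le_norm j by auto
      have D: "norm (J i j d) \<le> onorm (J i j) * norm d" using onorm[OF li] .
      have "norm (((a \<bullet> i) * (c \<bullet> j)) *\<^sub>R J i j d) = \<bar>a \<bullet> i\<bar> * \<bar>c \<bullet> j\<bar> * norm (J i j d)"
        by (simp add: abs_mult)
      also have "\<dots> \<le> norm a * norm c * (onorm (J i j) * norm d)"
        by (intro mult_mono A C D) auto
      finally show "norm (((a \<bullet> i) * (c \<bullet> j)) *\<^sub>R J i j d) \<le> (norm a * norm c * norm d) * onorm (J i j)"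
        by (simp add: mult_ac)
    qed
    have "norm (J a c d) \<le> (\<Sum>i\<in>Basis. \<Sum>j\<in>Basis. (norm a * norm c * norm d) * onorm (J i j))"
      using e1 sum_mono[OF e2] by (rule order_trans)
    also have "\<dots> = (norm a * norm c * norm d) * S"
      by (simp add: S_def sum_distrib_left)
    also have "\<dots> \<le> (norm a * norm c * norm d) * (1 + S)" by (simp add: mult_left_mono)
    finally show ?thesis by (simp add: mult_ac)
  qed
  moreover have "1 + S > 0" using S0 by simp
  ultimately show ?thesis by blast
qed

end

lemma deriv_op_prod:
  fixes A :: "'a::real_normed_vector \<Rightarrow> 'b::real_normed_vector \<Rightarrow> 'c::real_normed_vector"
  assumes Ax: "bounded_linear (A x)"
    and Ac: "\<And>e. e > 0 \<Longrightarrow> \<exists>d>0. \<forall>y. norm (y - x) < d \<longrightarrow> (\<forall>w. norm (A y w - A x w) \<le> e * norm w)"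
    and r: "(r has_derivative r') (at x)" and r0: "r x = 0"
  shows "((\<lambda>y. A y (r y)) has_derivative (\<lambda>h. A x (r' h))) (at x)"
proof -
  have lr: "bounded_linear r'" using r has_derivative_bounded_linear by blast
  obtain MA where MA: "MA > 0" "\<And>w. norm (A x w) \<le> norm w * MA"
    using bounded_linear.pos_bounded[OF Ax] by blast
  obtain C where C: "C > 0" "\<And>w. norm (r' w) \<le> norm w * C"
    using bounded_linear.pos_bounded[OF lr] by blast
  have ralt: "\<forall>e>0. \<exists>d>0. \<forall>y. norm(y - x) < d \<longrightarrow> norm (r y - r x - r'(y - x)) \<le> e * norm (y - x)"
    using r unfolding has_derivative_at_alt by blast
  have "\<exists>d>0. \<forall>y. norm (y - x) < d \<longrightarrow> norm (A y (r y) - A x (r x) - A x (r' (y - x))) \<le> e * norm (y - x)"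
    if e: "e > 0" for e
  proof -
    obtain d1 where d1: "d1 > 0" "\<And>y. norm(y - x) < d1 \<Longrightarrow> norm (r y - r x - r'(y - x)) \<le> (e / (2 * MA)) * norm (y - x)"
      using ralt e MA by (metis divide_pos_pos mult_pos_pos zero_less_numeral)
    obtain d2 where d2: "d2 > 0" "\<And>y. norm(y - x) < d2 \<Longrightarrow> norm (r y - r x - r'(y - x)) \<le> 1 * norm (y - x)"
      using ralt by (metis zero_less_one)
    obtain d3 where d3: "d3 > 0" "\<And>y w. norm(y - x) < d3 \<Longrightarrow> norm (A y w - A x w) \<le> (e / (2 * (C + 1))) * norm w"
      using Ac[of "e / (2 * (C + 1))"] e C by auto
    show ?thesis
    proof (intro exI[of _ "min d1 (min d2 d3)"] conjI allI impI)
      show "min d1 (min d2 d3) > 0" using d1 d2 d3 by simp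
      fix y assume y: "norm (y - x) < min d1 (min d2 d3)"
      have ry: "norm (r y) \<le> (C + 1) * norm (y - x)"
      proof -
        have "norm (r y) \<le> norm (r y - r'(y - x)) + norm (r' (y - x))"
          using norm_triangle_ineq[of "r y - r'(y - x)" "r'(y - x)"] by simp
        also have "\<dots> \<le> norm (y - x) + norm (y - x) * C" using d2(2)[of y] y C(2)[of "y - x"] r0 by simp
        finally show ?thesis by (simp add: algebra_simps)
      qed
      have eq: "A y (r y) - A x (r x) - A x (r' (y - x)) = A x (r y - r x - r' (y - x)) + (A y (r y) - A x (r y))"
        using r0 linear_diff[OF bounded_linear.linear[OF Ax]] linear_0[OF bounded_linear.linear[OF Ax]] by simp
      have "norm (A y (r y) - A x (r x) - A x (r' (y - x))) \<le> norm (A x (r y - r x - r' (y - x))) + norm (A y (r y) - A x (r y))"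
        unfolding eq by (rule norm_triangle_ineq)
      also have "\<dots> \<le> norm (r y - r x - r' (y - x)) * MA + (e / (2 * (C + 1))) * norm (r y)"
        using MA(2) d3(2)[of y "r y"] y by (intro add_mono) auto
      also have "\<dots> \<le> ((e / (2 * MA)) * norm (y - x)) * MA + (e / (2 * (C + 1))) * ((C + 1) * norm (y - x))"
        using d1(2)[of y] y ry MA e C by (intro add_mono mult_right_mono mult_left_mono) auto
      also have "\<dots> = e * norm (y - x)" using MA C by (simp add: field_simps)
      finally show "norm (A y (r y) - A x (r x) - A x (r' (y - x))) \<le> e * norm (y - x)" .
    qed
  qed
  moreover have "bounded_linear (\<lambda>h. A x (r' h))"
    using bounded_linear_compose[OF Ax lr] by simp
  ultimately show ?thesis unfolding has_derivative_at_alt by blast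
qed

context mj begin

abbreviation "UJ \<equiv> U_J J"
abbreviation "Gi x \<equiv> inv (Gop J x)"

lemma G_apply: "Gop J x u = u - (1/3) *\<^sub>R J x x u" by (simp add: Gop_def)

lemma G_lin: "linear (Gop J x)"
  unfolding Gop_def by (rule linearI) (simp_all add: J_add3 J_scale3 algebra_simps)

lemma G_bij: "x \<in> UJ \<Longrightarrow> bij (Gop J x)" by (simp add: U_J_def)

lemma Gi_lin: "x \<in> UJ \<Longrightarrow> linear (Gi x)"
  using G_bij G_lin bij_is_inj inj_linear_imp_inv_linear by blast

lemma G_Gi: "x \<in> UJ \<Longrightarrow> Gop J x (Gi x w) = w"
  using G_bij bij_is_surj surj_f_inv_f by metis

lemma Gi_G: "x \<in> UJ \<Longrightarrow> Gi x (Gop J x u) = u"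
  using G_bij bij_is_inj inv_f_f by metis

lemma G_diff: "Gop J y u - Gop J x u = - (1/3) *\<^sub>R (J (y - x) y u + J x (y - x) u)"
  by (simp add: G_apply J_sub1 J_sub2 algebra_simps)

lemma G_diff_bound:
  assumes K: "\<And>a c d. norm (J a c d) \<le> K * norm a * norm c * norm d" "K > 0"
  shows "norm (Gop J y u - Gop J x u) \<le> (K/3) * norm (y - x) * (norm y + norm x) * norm u"
proof -
  have "norm (Gop J y u - Gop J x u) = (1/3) * norm (J (y - x) y u + J x (y - x) u)"
    by (simp add: G_diff)
  also have "\<dots> \<le> (1/3) * (K * norm (y - x) * norm y * norm u + K * norm x * norm (y - x) * norm u)"
    using K(1)[of "y - x" y u] K(1)[of x "y - x" u] norm_triangle_ineq[of "J (y - x) y u" "J x (y - x) u"] by simp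
  also have "\<dots> = (K/3) * norm (y - x) * (norm y + norm x) * norm u" by (simp add: algebra_simps)
  finally show ?thesis .
qed

lemma U_loc:
  assumes x: "x \<in> UJ"
  shows "\<exists>M>0. \<exists>d>0. \<exists>c>0. \<forall>y. norm (y - x) < d \<longrightarrow> y \<in> UJ \<and> (\<forall>w. norm (Gi y w) \<le> M * norm w)
          \<and> (\<forall>u. norm (Gop J y u - Gop J x u) \<le> c * norm (y - x) * norm u)"
proof -
  obtain K where K: "K > 0" "\<And>a c d. norm (J a c d) \<le> K * norm a * norm c * norm d"
    using J_bound by blast
  obtain M0 where M0: "M0 > 0" "\<And>w. norm (Gi x w) \<le> M0 * norm w"
    using linear_bounded_pos[OF Gi_lin[OF x]] by blast
  define c where "c = K * (2 * norm x + 1) / 3"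
  have c0: "c > 0" unfolding c_def using K(1) by (intro divide_pos_pos mult_pos_pos) (auto intro: add_nonneg_pos)
  define d where "d = min 1 (1 / (2 * M0 * c))"
  have d0: "d > 0" using M0 c0 by (simp add: d_def)
  have Gd: "norm (Gop J y u - Gop J x u) \<le> c * norm (y - x) * norm u" if y: "norm (y - x) < d" for y u
  proof -
    have ny: "norm y \<le> norm x + 1" using y norm_triangle_sub[of y x] by (simp add: d_def)
    have "norm (Gop J y u - Gop J x u) \<le> (K/3) * norm (y - x) * (norm y + norm x) * norm u"
      by (rule G_diff_bound[OF K(2) K(1)])
    also have "\<dots> \<le> (K/3) * norm (y - x) * (2 * norm x + 1) * norm u"
      using ny K by (intro mult_right_mono mult_left_mono) auto
    also have "\<dots> = c * norm (y - x) * norm u" by (simp add: c_def)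
    finally show ?thesis .
  qed
  have low: "norm u \<le> 2 * M0 * norm (Gop J y u)" if y: "norm (y - x) < d" for y u
  proof -
    have n1: "norm (y - x) \<le> 1 / (2 * M0 * c)" using y by (simp add: d_def)
    have "c * norm (y - x) \<le> c * (1 / (2 * M0 * c))" by (rule mult_left_mono[OF n1]) (use c0 in simp)
    also have "\<dots> = 1 / (2 * M0)" using c0 by (simp add: field_simps)
    finally have cy: "c * norm (y - x) \<le> 1 / (2 * M0)" .
    have "norm u = norm (Gi x (Gop J x u))" by (simp add: Gi_G[OF x])
    also have "\<dots> \<le> M0 * norm (Gop J x u)" by (rule M0(2))
    also have "\<dots> \<le> M0 * (norm (Gop J y u) + norm (Gop J y u - Gop J x u))"
      using M0 norm_triangle_sub[of "Gop J x u" "Gop J y u"] by (intro mult_left_mono) (auto simp: norm_minus_commute)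
    also have "\<dots> \<le> M0 * (norm (Gop J y u) + (1 / (2 * M0)) * norm u)"
      using Gd[OF y, of u] cy M0 mult_right_mono[OF cy norm_ge_zero[of u]] by (intro mult_left_mono add_left_mono) auto
    also have "\<dots> = M0 * norm (Gop J y u) + norm u / 2" using M0 by (simp add: field_simps)
    finally show ?thesis by simp
  qed
  have yU: "y \<in> UJ" if y: "norm (y - x) < d" for y
  proof -
    have "inj (Gop J y)"
      unfolding linear_inj_iff_eq_0[OF G_lin]
      using low[OF y] M0 by (metis mult_zero_right norm_eq_zero norm_le_zero_iff)
    then have "surj (Gop J y)" using linear_injective_imp_surjective[OF G_lin] by blast
    then show ?thesis using \<open>inj (Gop J y)\<close> by (simp add: U_J_def bij_def)
  qed
  have "norm (Gi y w) \<le> (2 * M0) * norm w" if y: "norm (y - x) < d" for y w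
    using low[OF y, of "Gi y w"] G_Gi[OF yU[OF y]] by simp
  then show ?thesis using M0 d0 c0 Gd yU
    by (intro exI[of _ "2 * M0"] conjI exI[of _ d] exI[of _ c]) auto
qed

lemma open_UJ: "open UJ"
  unfolding open_contains_ball
proof
  fix x assume "x \<in> UJ"
  then obtain M d c where "d > 0" "\<And>y. norm (y - x) < d \<Longrightarrow> y \<in> UJ"
    using U_loc by meson
  then show "\<exists>e>0. ball x e \<subseteq> UJ" by (auto simp: dist_norm norm_minus_commute)
qed

lemma zero_UJ: "0 \<in> UJ"
proof -
  have "Gop J 0 = id" by (simp add: Gop_def fun_eq_iff)
  then show ?thesis by (simp add: U_J_def)
qed

lemma Gi_zero: "Gi 0 = id"
proof -
  have "Gop J 0 = id" by (simp add: Gop_def fun_eq_iff)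
  then show ?thesis by (simp add: inv_id)
qed

lemma Gi_cont:
  assumes x: "x \<in> UJ" and e: "e > 0"
  shows "\<exists>d>0. \<forall>y. norm (y - x) < d \<longrightarrow> y \<in> UJ \<and> (\<forall>w. norm (Gi y w - Gi x w) \<le> e * norm w)"
proof -
  obtain M d c where M: "M > 0" "d > 0" "c > 0" and
    H: "\<And>y. norm (y - x) < d \<Longrightarrow> y \<in> UJ \<and> (\<forall>w. norm (Gi y w) \<le> M * norm w)
          \<and> (\<forall>u. norm (Gop J y u - Gop J x u) \<le> c * norm (y - x) * norm u)"
    using U_loc[OF x] by blast
  have Mx: "norm (Gi x w) \<le> M * norm w" for w using H[of x] M by simp
  define d' where "d' = min d (e / (M * M * c))"
  have d'0: "d' > 0" using M e by (simp add: d'_def)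
  have "norm (Gi y w - Gi x w) \<le> e * norm w" if y: "norm (y - x) < d'" for y w
  proof -
    have yd: "norm (y - x) < d" using y by (simp add: d'_def)
    have yU: "y \<in> UJ" using H[OF yd] by blast
    have "Gi y w - Gi x w = Gi y (Gop J x (Gi x w) - Gop J y (Gi x w))"
      using Gi_lin[OF yU] G_Gi[OF x] Gi_G[OF yU] by (simp add: linear_diff)
    then have "norm (Gi y w - Gi x w) \<le> M * norm (Gop J x (Gi x w) - Gop J y (Gi x w))"
      using H[OF yd] by simp
    also have "\<dots> \<le> M * (c * norm (y - x) * norm (Gi x w))"
      using H[OF yd] M by (intro mult_left_mono) (auto simp: norm_minus_commute)
    also have "\<dots> \<le> M * (c * norm (y - x) * (M * norm w))"
      using Mx[of w] M by (intro mult_left_mono) auto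
    also have "\<dots> = (M * M * c) * norm (y - x) * norm w" by (simp add: mult_ac)
    also have "\<dots> \<le> (M * M * c) * (e / (M * M * c)) * norm w"
      using y M by (intro mult_right_mono mult_left_mono) (auto simp: d'_def)
    also have "\<dots> = e * norm w" using M by simp
    finally show ?thesis .
  qed
  then show ?thesis using d'0 H by (auto simp: d'_def intro!: exI[of _ d'])
qed

lemma Gi_deriv:
  assumes x: "x \<in> UJ" and z: "(z has_derivative z') (at x)"
  shows "((\<lambda>y. Gi y (z y)) has_derivative
          (\<lambda>h. Gi x (z' h + (2/3) *\<^sub>R J x h (Gi x (z x))))) (at x)"
proof -
  define w0 where "w0 = Gi x (z x)"
  define r where "r y = z y - Gop J y w0" for y
  have bJ: "bounded_bilinear (\<lambda>u v. J u v w0)"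
    using J_bil bilinear_conv_bounded_bilinear by blast
  have dJ: "((\<lambda>y. J y y w0) has_derivative (\<lambda>h. J y h w0 + J h y w0)) (at y)" for y
    using bounded_bilinear.FDERIV[OF bJ has_derivative_ident has_derivative_ident] by simp
  have dr: "(r has_derivative (\<lambda>h. z' h + (2/3) *\<^sub>R J x h w0)) (at x)"
  proof -
    have "(r has_derivative (\<lambda>h. z' h - (0 - (1/3) *\<^sub>R (J x h w0 + J h x w0)))) (at x)"
      unfolding r_def G_apply
      by (intro has_derivative_diff z has_derivative_const has_derivative_scaleR_right dJ)
    moreover have "(\<lambda>h. z' h - (0 - (1/3) *\<^sub>R (J x h w0 + J h x w0))) = (\<lambda>h. z' h + (2/3) *\<^sub>R J x h w0)"
      proof -
      have Jhx: "J h x w0 = J x h w0" for h using J_sym by metis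
      have tt: "(1/3) *\<^sub>R a + (1/3) *\<^sub>R a = (2/3) *\<^sub>R (a::'v)" for a
        by (simp add: scaleR_add_left[symmetric])
      have tt2: "(1/3) *\<^sub>R (a + a) = (2/3) *\<^sub>R (a::'v)" for a
        by (simp only: scaleR_2[symmetric] scaleR_scaleR) simp
      show ?thesis by (simp add: fun_eq_iff Jhx tt tt2)
    qed
    ultimately show ?thesis by simp
  qed
  have r0: "r x = 0" by (simp add: r_def w0_def G_Gi[OF x])
  have Gx: "bounded_linear (Gi x)" using Gi_lin[OF x] linear_conv_bounded_linear by blast
  have D: "((\<lambda>y. Gi y (r y)) has_derivative (\<lambda>h. Gi x (z' h + (2/3) *\<^sub>R J x h w0))) (at x)"
  proof (rule deriv_op_prod[where A="\<lambda>y. Gi y" and x=x, OF Gx _ dr r0])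
    fix e :: real assume "e > 0"
    then show "\<exists>d>0. \<forall>y. norm (y - x) < d \<longrightarrow> (\<forall>w. norm (Gi y w - Gi x w) \<le> e * norm w)"
      using Gi_cont[OF x] by blast
  qed
  have D2: "((\<lambda>y. w0 + Gi y (r y)) has_derivative (\<lambda>h. Gi x (z' h + (2/3) *\<^sub>R J x h w0))) (at x)"
    using has_derivative_add[OF has_derivative_const D] by simp
  have eq: "w0 + Gi y (r y) = Gi y (z y)" if "y \<in> UJ" for y
    using Gi_lin[OF that] Gi_G[OF that] by (simp add: r_def linear_diff)
  show ?thesis
    using has_derivative_transform_within_open[OF D2 open_UJ x eq] by (simp add: w0_def)
qed

end

context mj begin

lemma Gi_cont_comp:
  assumes x: "x \<in> UJ" and z: "isCont z x"
  shows "isCont (\<lambda>y. Gi y (z y)) x"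
  unfolding continuous_at_eps_delta dist_norm
proof (intro allI impI)
  fix e :: real assume e: "e > 0"
  obtain M d0 c where M: "M > 0" "d0 > 0" and
    H: "\<And>y. norm (y - x) < d0 \<Longrightarrow> y \<in> UJ \<and> (\<forall>w. norm (Gi y w) \<le> M * norm w)"
    using U_loc[OF x] by blast
  obtain d1 where d1: "d1 > 0" "\<And>y. norm (y - x) < d1 \<Longrightarrow> norm (z y - z x) < e / (2 * M)"
    using z M e unfolding continuous_at_eps_delta dist_norm by (metis divide_pos_pos mult_pos_pos zero_less_numeral)
  obtain d2 where d2: "d2 > 0" "\<And>y. norm (y - x) < d2 \<Longrightarrow> (\<forall>w. norm (Gi y w - Gi x w) \<le> (e / (2 * (norm (z x) + 1))) * norm w)"
  proof -
    have "e / (2 * (norm (z x) + 1)) > 0" using e by (intro divide_pos_pos mult_pos_pos) (auto intro: add_nonneg_pos)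
    from Gi_cont[OF x this] show ?thesis using that by blast
  qed
  show "\<exists>d>0. \<forall>y. norm (y - x) < d \<longrightarrow> norm (Gi y (z y) - Gi x (z x)) < e"
  proof (intro exI[of _ "min d0 (min d1 d2)"] conjI allI impI)
    show "min d0 (min d1 d2) > 0" using M d1 d2 by simp
    fix y assume y: "norm (y - x) < min d0 (min d1 d2)"
    have yU: "y \<in> UJ" and My: "\<And>w. norm (Gi y w) \<le> M * norm w" using H[of y] y by auto
    have "Gi y (z y) - Gi x (z x) = Gi y (z y - z x) + (Gi y (z x) - Gi x (z x))"
      using Gi_lin[OF yU] by (simp add: linear_diff)
    then have "norm (Gi y (z y) - Gi x (z x)) \<le> norm (Gi y (z y - z x)) + norm (Gi y (z x) - Gi x (z x))"
      by (metis norm_triangle_ineq)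
    also have "\<dots> < M * (e / (2 * M)) + (e / (2 * (norm (z x) + 1))) * norm (z x)"
    proof (rule add_less_le_mono)
      have "norm (Gi y (z y - z x)) \<le> M * norm (z y - z x)" by (rule My)
      also have "\<dots> < M * (e / (2 * M))" using d1(2)[of y] y M by (intro mult_strict_left_mono) auto
      finally show "norm (Gi y (z y - z x)) < M * (e / (2 * M))" .
      show "norm (Gi y (z x) - Gi x (z x)) \<le> (e / (2 * (norm (z x) + 1))) * norm (z x)"
        using d2(2)[of y] y by auto
    qed
    also have "\<dots> \<le> e / 2 + e / 2"
    proof (rule add_mono)
      show "M * (e / (2 * M)) \<le> e / 2" using M by simp
      have "norm (z x) / (norm (z x) + 1) \<le> 1" by (simp add: divide_le_eq_1 add_nonneg_pos)
      then have "(e / 2) * (norm (z x) / (norm (z x) + 1)) \<le> (e / 2) * 1"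
        using e by (intro mult_left_mono) auto
      then show "(e / (2 * (norm (z x) + 1))) * norm (z x) \<le> e / 2" by (simp add: field_simps)
    qed
    finally show "norm (Gi y (z y) - Gi x (z x)) < e" by simp
  qed
qed

lemma Ck_Gi: "Ck_on n UJ z \<Longrightarrow> Ck_on n UJ (\<lambda>y. Gi y (z y))"
proof (induction n arbitrary: z)
  case 0
  then show ?case
    using Gi_cont_comp open_UJ by (simp add: continuous_on_eq_continuous_at)
next
  case (Suc n)
  have dz: "\<And>x. x \<in> UJ \<Longrightarrow> (z has_derivative frechet_derivative z (at x)) (at x)"
    using Ck_diff[OF Suc.prems open_UJ] by blast
  have D: "\<And>x. x \<in> UJ \<Longrightarrow> ((\<lambda>y. Gi y (z y)) has_derivative
     (\<lambda>h. Gi x (frechet_derivative z (at x) h + (2/3) *\<^sub>R J x h (Gi x (z x))))) (at x)"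
    using Gi_deriv dz by blast
  have "(\<lambda>y. Gi y (z y)) differentiable_on UJ"
    using D open_UJ by (auto simp: differentiable_on_eq_differentiable_at differentiable_def)
  moreover have "Ck_on n UJ (\<lambda>x. frechet_derivative (\<lambda>y. Gi y (z y)) (at x) h)" for h
  proof (rule Ck_cong[OF open_UJ])
    have q: "Ck_on n UJ (\<lambda>x. frechet_derivative z (at x) h + (2/3) *\<^sub>R J x h (Gi x (z x)))"
      using Suc.prems Suc.IH[OF Ck_mono[OF Suc.prems]]
      by (intro Ck_add[OF open_UJ] Ck_deriv Ck_cmul[OF open_UJ] Ck_J[OF open_UJ] Ck_id[OF open_UJ] Ck_const) auto
    show "Ck_on n UJ (\<lambda>x. Gi x (frechet_derivative z (at x) h + (2/3) *\<^sub>R J x h (Gi x (z x))))"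
      using Suc.IH[OF q] .
    show "\<And>x. x \<in> UJ \<Longrightarrow> Gi x (frechet_derivative z (at x) h + (2/3) *\<^sub>R J x h (Gi x (z x))) =
        frechet_derivative (\<lambda>y. Gi y (z y)) (at x) h"
      by (simp add: fd_apply[OF D])
  qed
  ultimately show ?case by simp
qed

end

lemma smooth_Ck: "smooth_fn_on U f \<longleftrightarrow> (\<forall>n. Ck_on n U f)" by (simp add: smooth_fn_on_def)

lemma smooth_diff:
  "smooth_fn_on U f \<Longrightarrow> open U \<Longrightarrow> x \<in> U \<Longrightarrow> (f has_derivative frechet_derivative f (at x)) (at x)"
  using Ck_diff[of 0 U f] by (simp add: smooth_Ck)

lemma Dflat_expand:
  fixes u v :: "'v::euclidean_space \<Rightarrow> 'v"
  assumes "(v has_derivative v') (at x)"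
  shows "Dflat u v x = (\<Sum>i\<in>Basis. (u x \<bullet> i) *\<^sub>R frechet_derivative v (at x) i)"
proof -
  have "linear (frechet_derivative v (at x))"
    using assms frechet_derivative_at has_derivative_linear by metis
  then show ?thesis unfolding Dflat_def Dir_def by (rule lin_expand)
qed

lemma Ck_Dflat:
  fixes u v :: "'v::euclidean_space \<Rightarrow> 'v"
  assumes U: "open U" and v: "Ck_on (Suc n) U v" and u: "Ck_on n U u"
  shows "Ck_on n U (Dflat u v)"
proof (rule Ck_cong[OF U])
  show "Ck_on n U (\<lambda>x. \<Sum>i\<in>Basis. (u x \<bullet> i) *\<^sub>R frechet_derivative v (at x) i)"
    by (intro Ck_sum[OF U] finite_Basis Ck_scaleR[OF U] Ck_inner[OF U] u Ck_const Ck_deriv v)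
  show "\<And>x. x \<in> U \<Longrightarrow> (\<Sum>i\<in>Basis. (u x \<bullet> i) *\<^sub>R frechet_derivative v (at x) i) = Dflat u v x"
    using Dflat_expand Ck_diff[OF v U] by metis
qed

context mj begin

lemma J_deriv:
  assumes p: "(p has_derivative p') (at x)" and q: "(q has_derivative q') (at x)" and r: "(r has_derivative r') (at x)"
  shows "((\<lambda>y. J (p y) (q y) (r y)) has_derivative
           (\<lambda>h. J (p' h) (q x) (r x) + J (p x) (q' h) (r x) + J (p x) (q x) (r' h))) (at x)"
proof -
  have li: "bounded_linear (J i j)" for i j using J_lin linear_conv_bounded_linear by blast
  have D1: "((\<lambda>y. \<Sum>i\<in>Basis. \<Sum>j\<in>Basis. ((p y \<bullet> i) * (q y \<bullet> j)) *\<^sub>R J i j (r y)) has_derivative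
     (\<lambda>h. \<Sum>i\<in>Basis. \<Sum>j\<in>Basis. ((p x \<bullet> i) * (q x \<bullet> j)) *\<^sub>R J i j (r' h)
         + ((p x \<bullet> i) * (q' h \<bullet> j) + (p' h \<bullet> i) * (q x \<bullet> j)) *\<^sub>R J i j (r x))) (at x)"
    by (intro has_derivative_sum has_derivative_scaleR has_derivative_mult has_derivative_inner_left
          bounded_linear.has_derivative[OF li] p q r)
  have E: "(\<Sum>i\<in>Basis. \<Sum>j\<in>Basis. ((p x \<bullet> i) * (q x \<bullet> j)) *\<^sub>R J i j (r' h)
         + ((p x \<bullet> i) * (q' h \<bullet> j) + (p' h \<bullet> i) * (q x \<bullet> j)) *\<^sub>R J i j (r x))
      = J (p' h) (q x) (r x) + J (p x) (q' h) (r x) + J (p x) (q x) (r' h)" for h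
    by (simp add: J_expand[of "p' h"] J_expand[of "p x" "q' h"] J_expand[of "p x" "q x" "r' h"]
          scaleR_add_left sum.distrib algebra_simps)
  show ?thesis using D1 unfolding E J_expand[symmetric] .
qed

lemma smooth_g: "smooth_fn_on UJ (\<lambda>x. gJ b J x u v)"
proof -
  have bbb: "bounded_bilinear b" using bb bilinear_conv_bounded_bilinear by blast
  have "Ck_on n UJ (\<lambda>x. b (u - (1/3) *\<^sub>R J x x u) v)" for n
    by (intro Ck_bilinear[OF bbb open_UJ] Ck_diff_fun[OF open_UJ] Ck_const Ck_cmul[OF open_UJ]
        Ck_J[OF open_UJ] Ck_id[OF open_UJ])
  then show ?thesis by (simp add: smooth_Ck gJ_def G_apply)
qed

lemma smooth_nabla:
  assumes u: "smooth_fn_on UJ u" and v: "smooth_fn_on UJ v"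
  shows "smooth_fn_on UJ (nablaJ J u v)"
proof -
  have "Ck_on n UJ (\<lambda>x. Dflat u v x + (2/3) *\<^sub>R Gi x (J (u x) (v x) x))" for n
    using u v unfolding smooth_Ck
    by (intro Ck_add[OF open_UJ] Ck_Dflat[OF open_UJ] Ck_cmul[OF open_UJ] Ck_Gi Ck_J[OF open_UJ] Ck_id[OF open_UJ]) auto
  then show ?thesis unfolding smooth_Ck nablaJ_def by simp
qed

lemma g_sym: "gJ b J x u v = gJ b J x v u"
proof -
  have "b (J x x u) v = b (J u v x) x" using J_metric by simp
  moreover have "b (J x x v) u = b (J v u x) x" using J_metric by simp
  moreover have "J v u = J u v" using J_sym by simp
  ultimately show ?thesis by (simp add: gJ_def G_apply b_sub1 b_scale1 b_sym[of u v])
qed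

lemma g_bil: "bilinear (gJ b J x)"
  unfolding bilinear_def
proof (intro conjI allI)
  fix y show "linear (\<lambda>u. gJ b J x u y)"
    by (rule linearI) (simp_all add: gJ_def linear_add[OF G_lin] linear_scale[OF G_lin] b_add1 b_scale1)
next
  fix u show "linear (\<lambda>y. gJ b J x u y)"
    by (rule linearI) (simp_all add: gJ_def b_add2 b_scale2)
qed

lemma g_nondeg: "x \<in> UJ \<Longrightarrow> nondegenerate (gJ b J x)"
  unfolding nondegenerate_def
proof (intro allI impI)
  fix u assume x: "x \<in> UJ" and H: "\<forall>v. gJ b J x u v = 0"
  then have "Gop J x u = 0" using nb unfolding nondegenerate_def gJ_def by blast
  then have "Gi x (Gop J x u) = Gi x 0" by simp
  then show "u = 0" using Gi_G[OF x] linear_0[OF Gi_lin[OF x]] by simp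
qed

lemma g_zero: "gJ b J 0 = b"
  by (simp add: fun_eq_iff gJ_def G_apply)

lemma g_sub1: "gJ b J x (a - a') c = gJ b J x a c - gJ b J x a' c"
  using bilinear_lsub[OF g_bil] by fast
lemma g_add1: "gJ b J x (a + a') c = gJ b J x a c + gJ b J x a' c"
  using bilinear_ladd[OF g_bil] by fast
lemma g_scale1: "gJ b J x (r *\<^sub>R a) c = r * gJ b J x a c"
  using bilinear_lmul[OF g_bil] by fastforce

lemma torsion: "nablaJ J u v x - nablaJ J v u x = lie u v x"
  by (simp add: nablaJ_def lie_def J_sym[of "u x"])

end

context mj begin

lemma g_add2: "gJ b J x a (c + c') = gJ b J x a c + gJ b J x a c'"
  using bilinear_radd[OF g_bil] by fast
lemma g_scale2: "gJ b J x a (r *\<^sub>R c) = r * gJ b J x a c"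
  using bilinear_rmul[OF g_bil] by fastforce
lemma g_Gi1: "x \<in> UJ \<Longrightarrow> gJ b J x (Gi x z) c = b z c"
  by (simp add: gJ_def G_Gi)
lemma g_Gi2: "x \<in> UJ \<Longrightarrow> gJ b J x c (Gi x z) = b z c"
  using g_sym g_Gi1 by metis

lemma key_id: "b (J x h V) W + b (J h V x) W + b (J h W x) V = 0"
proof -
  have 1: "b (J h W x) V = b (J x V h) W" using J_metric by simp
  have 2: "J x V = J V x" using J_sym by simp
  have "J x h V + J h V x + J V x h = 0" using J_bianchi by simp
  then have "b (J x h V + J h V x + J x V h) W = 0" using 2 by (simp add: bilinear_lzero[OF bb])
  then show ?thesis using 1 by (simp add: b_add1)
qed

lemma metric_compat:
  assumes x: "x \<in> UJ" and v: "(v has_derivative v') (at x)" and w: "(w has_derivative w') (at x)"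
  shows "Dir (\<lambda>y. gJ b J y (v y) (w y)) x (u x) =
     gJ b J x (nablaJ J u v x) (w x) + gJ b J x (v x) (nablaJ J u w x)"
proof -
  define h where "h = u x"
  have bbb: "bounded_bilinear b" using bb bilinear_conv_bounded_bilinear by blast
  have Dg: "((\<lambda>y. v y - (1/3) *\<^sub>R J y y (v y)) has_derivative
      (\<lambda>h. v' h - (1/3) *\<^sub>R (J h x (v x) + J x h (v x) + J x x (v' h)))) (at x)"
    by (intro has_derivative_diff v has_derivative_scaleR_right J_deriv has_derivative_ident)
  have DF: "((\<lambda>y. b (v y - (1/3) *\<^sub>R J y y (v y)) (w y)) has_derivative
     (\<lambda>h. b (v x - (1/3) *\<^sub>R J x x (v x)) (w' h) + b (v' h - (1/3) *\<^sub>R (J h x (v x) + J x h (v x) + J x x (v' h))) (w x))) (at x)"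
    using bounded_bilinear.FDERIV[OF bbb Dg w] by simp
  have L: "Dir (\<lambda>y. gJ b J y (v y) (w y)) x h =
       b (v x - (1/3) *\<^sub>R J x x (v x)) (w' h) + b (v' h - (1/3) *\<^sub>R (J h x (v x) + J x h (v x) + J x x (v' h))) (w x)"
    unfolding Dir_def gJ_def G_apply by (rule fd_apply[OF DF])
  have nv: "nablaJ J u v x = v' h + (2/3) *\<^sub>R Gi x (J h (v x) x)"
    by (simp add: nablaJ_def Dflat_def Dir_def fd_apply[OF v] h_def)
  have nw: "nablaJ J u w x = w' h + (2/3) *\<^sub>R Gi x (J h (w x) x)"
    by (simp add: nablaJ_def Dflat_def Dir_def fd_apply[OF w] h_def)
  have R: "gJ b J x (nablaJ J u v x) (w x) + gJ b J x (v x) (nablaJ J u w x)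
     = gJ b J x (v' h) (w x) + (2/3) * b (J h (v x) x) (w x) + gJ b J x (v x) (w' h) + (2/3) * b (J h (w x) x) (v x)"
    unfolding nv nw by (simp add: g_add1 g_add2 g_scale1 g_scale2 g_Gi1[OF x] g_Gi2[OF x])
  have Jhx: "J h x = J x h" using J_sym by simp
  have "Dir (\<lambda>y. gJ b J y (v y) (w y)) x h - (gJ b J x (nablaJ J u v x) (w x) + gJ b J x (v x) (nablaJ J u w x))
     = - (2/3) * (b (J x h (v x)) (w x) + b (J h (v x) x) (w x) + b (J h (w x) x) (v x))"
    unfolding L R by (simp add: gJ_def G_apply Jhx b_sub1 b_sub2 b_add1 b_scale1 algebra_simps)
  then show ?thesis using key_id h_def by simp
qed

lemma smooth_field_diff: "u \<in> vfields UJ \<Longrightarrow> x \<in> UJ \<Longrightarrow> (u has_derivative frechet_derivative u (at x)) (at x)"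
  using smooth_diff open_UJ by (simp add: vfields_def)

lemma const_field: "(\<lambda>y. e) \<in> vfields UJ"
  by (simp add: vfields_def smooth_Ck Ck_const)

lemma affine: "affine_connection UJ (nablaJ J)"
  unfolding affine_connection_def
proof (intro conjI ballI)
  fix u v assume "u \<in> vfields UJ" "v \<in> vfields UJ"
  then show "smooth_fn_on UJ (nablaJ J u v)" using smooth_nabla by (simp add: vfields_def)
next
  fix u w v x assume u: "u \<in> vfields UJ" and w: "w \<in> vfields UJ" and v: "v \<in> vfields UJ" and x: "x \<in> UJ"
  note dv = smooth_field_diff[OF v x] and dw = smooth_field_diff[OF w x]
  have lv: "linear (frechet_derivative v (at x))" using dv has_derivative_linear by blast
  have gl: "linear (Gi x)" using Gi_lin[OF x] .
  show "nablaJ J (\<lambda>y. u y + w y) v x = nablaJ J u v x + nablaJ J w v x"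
    by (simp add: nablaJ_def Dflat_def Dir_def linear_add[OF lv] J_add1 linear_add[OF gl] scaleR_add_right)
  have dvw: "((\<lambda>y. v y + w y) has_derivative (\<lambda>h. frechet_derivative v (at x) h + frechet_derivative w (at x) h)) (at x)"
    using has_derivative_add[OF dv dw] .
  show "nablaJ J u (\<lambda>y. v y + w y) x = nablaJ J u v x + nablaJ J u w x"
    by (simp add: nablaJ_def Dflat_def Dir_def fd_apply[OF dvw] J_add2 linear_add[OF gl] scaleR_add_right)
next
  fix f u v x assume f: "f \<in> sfuns UJ" and u: "u \<in> vfields UJ" and v: "v \<in> vfields UJ" and x: "x \<in> UJ"
  note dv = smooth_field_diff[OF v x]
  have df: "(f has_derivative frechet_derivative f (at x)) (at x)"
    using f smooth_diff open_UJ x by (simp add: sfuns_def)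
  have lv: "linear (frechet_derivative v (at x))" using dv has_derivative_linear by blast
  have gl: "linear (Gi x)" using Gi_lin[OF x] .
  show "nablaJ J (\<lambda>y. f y *\<^sub>R u y) v x = f x *\<^sub>R nablaJ J u v x"
    by (simp add: nablaJ_def Dflat_def Dir_def linear_scale[OF lv] J_scale1 linear_scale[OF gl] scaleR_add_right)
  have dfv: "((\<lambda>y. f y *\<^sub>R v y) has_derivative (\<lambda>h. f x *\<^sub>R frechet_derivative v (at x) h + frechet_derivative f (at x) h *\<^sub>R v x)) (at x)"
    using has_derivative_scaleR[OF df dv] .
  show "nablaJ J u (\<lambda>y. f y *\<^sub>R v y) x = Dir f x (u x) *\<^sub>R v x + f x *\<^sub>R nablaJ J u v x"
    by (simp add: nablaJ_def Dflat_def Dir_def fd_apply[OF dfv] J_scale2 linear_scale[OF gl] scaleR_add_right algebra_simps)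
qed

lemma levi: "levi_civita UJ (gJ b J) (nablaJ J)"
  unfolding levi_civita_def
proof (intro conjI ballI affine)
  fix u v x show "nablaJ J u v x - nablaJ J v u x = lie u v x" by (rule torsion)
next
  fix u v w x assume u: "u \<in> vfields UJ" and v: "v \<in> vfields UJ" and w: "w \<in> vfields UJ" and x: "x \<in> UJ"
  show "Dir (\<lambda>y. gJ b J y (v y) (w y)) x (u x) = gJ b J x (nablaJ J u v x) (w x) + gJ b J x (v x) (nablaJ J u w x)"
    by (rule metric_compat[OF x smooth_field_diff[OF v x] smooth_field_diff[OF w x]])
qed

lemma unique:
  assumes L: "levi_civita UJ (gJ b J) nabla" and u: "u \<in> vfields UJ" and v: "v \<in> vfields UJ" and x: "x \<in> UJ"
  shows "nabla u v x = nablaJ J u v x"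
proof -
  define A where "A p q = nabla p q x - nablaJ J p q x" for p q
  define T where "T p q r = gJ b J x (A p q) (r x)" for p q r
  have tor: "\<And>p q. p \<in> vfields UJ \<Longrightarrow> q \<in> vfields UJ \<Longrightarrow> A p q = A q p"
  proof -
    fix p q assume "p \<in> vfields UJ" "q \<in> vfields UJ"
    then have "nabla p q x - nabla q p x = lie p q x" using L x unfolding levi_civita_def by blast
    moreover have "nablaJ J p q x - nablaJ J q p x = lie p q x" by (rule torsion)
    ultimately show "A p q = A q p" unfolding A_def by (simp add: algebra_simps)
  qed
  have met: "\<And>p q r. p \<in> vfields UJ \<Longrightarrow> q \<in> vfields UJ \<Longrightarrow> r \<in> vfields UJ \<Longrightarrow> T p q r = - T p r q"
  proof -
    fix p q r assume p: "p \<in> vfields UJ" and q: "q \<in> vfields UJ" and r: "r \<in> vfields UJ"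
    have 1: "Dir (\<lambda>y. gJ b J y (q y) (r y)) x (p x) = gJ b J x (nabla p q x) (r x) + gJ b J x (q x) (nabla p r x)"
      using L p q r x unfolding levi_civita_def by blast
    have 2: "Dir (\<lambda>y. gJ b J y (q y) (r y)) x (p x) = gJ b J x (nablaJ J p q x) (r x) + gJ b J x (q x) (nablaJ J p r x)"
      using levi p q r x unfolding levi_civita_def by blast
    have "gJ b J x (q x) (nabla p r x) = gJ b J x (nabla p r x) (q x)" by (rule g_sym)
    moreover have "gJ b J x (q x) (nablaJ J p r x) = gJ b J x (nablaJ J p r x) (q x)" by (rule g_sym)
    ultimately show "T p q r = - T p r q"
      using 1 2 unfolding T_def A_def g_sub1 by simp
  qed
  have T0: "T u v w = 0" if w: "w \<in> vfields UJ" for w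
  proof -
    have "T u v w = T v u w" unfolding T_def using tor[OF u v] by simp
    also have "\<dots> = - T v w u" using met[OF v u w] .
    also have "\<dots> = - T w v u" unfolding T_def using tor[OF v w] by simp
    also have "\<dots> = T w u v" using met[OF w v u] by simp
    also have "\<dots> = T u w v" unfolding T_def using tor[OF w u] by simp
    also have "\<dots> = - T u v w" using met[OF u w v] by simp
    finally show ?thesis by simp
  qed
  have "\<forall>e. gJ b J x (A u v) e = 0"
  proof
    fix e show "gJ b J x (A u v) e = 0" using T0[OF const_field[of e]] by (simp add: T_def)
  qed
  then have "A u v = 0" using g_nondeg[OF x] unfolding nondegenerate_def by blast
  then show ?thesis by (simp add: A_def)
qed

end

definition negdef :: "('v::euclidean_space \<Rightarrow> 'v \<Rightarrow> real) \<Rightarrow> 'v set \<Rightarrow> bool" where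
  "negdef q W \<longleftrightarrow> subspace W \<and> (\<forall>w\<in>W. w \<noteq> 0 \<longrightarrow> q w w < 0)"

lemma ni_facts:
  fixes q :: "'v::euclidean_space \<Rightarrow> 'v \<Rightarrow> real"
  shows "\<exists>W. negdef q W \<and> dim W = neg_index q" and "negdef q W \<Longrightarrow> dim W \<le> neg_index q"
proof -
  let ?S = "{dim W | W. subspace W \<and> (\<forall>w\<in>W. w \<noteq> 0 \<longrightarrow> q w w < 0)}"
  have "?S \<subseteq> {..DIM('v)}" using dim_subset_UNIV by fastforce
  then have fin: "finite ?S" using finite_subset by blast
  have "subspace {0::'v}" by (simp add: subspace_def)
  then have "0 \<in> ?S" by (intro CollectI exI[of _ "{0::'v}"]) auto
  then have ne: "?S \<noteq> {}" by blast
  show "\<exists>W. negdef q W \<and> dim W = neg_index q"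
    using Max_in[OF fin ne] unfolding neg_index_def negdef_def by auto
  show "negdef q W \<Longrightarrow> dim W \<le> neg_index q"
    unfolding neg_index_def negdef_def by (rule Max_ge[OF fin]) auto
qed

lemma negdef_uniform:
  fixes Q :: "'v::euclidean_space \<Rightarrow> 'v \<Rightarrow> real"
  assumes Q: "bilinear Q" and W: "negdef Q W"
  shows "\<exists>c>0. \<forall>w\<in>W. Q w w \<le> - c * (norm w)^2"
proof -
  let ?S = "W \<inter> sphere 0 1"
  have sub: "subspace W" using W by (simp add: negdef_def)
  have cS0: "compact (sphere (0::'v) 1 \<inter> W)" by (rule compact_Int_closed[OF compact_sphere closed_subspace[OF sub]])
  have "?S = sphere 0 1 \<inter> W" by blast
  then have cS: "compact ?S" using cS0 by simp
  have sc: "Q w w = (norm w)^2 * Q (w /\<^sub>R norm w) (w /\<^sub>R norm w)" if "w \<noteq> 0" for w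
    using that by (simp add: bilinear_lmul[OF Q] bilinear_rmul[OF Q] power2_eq_square field_simps)
  show ?thesis
  proof (cases "?S = {}")
    case True
    have z: "w = 0" if "w \<in> W" for w
    proof (rule ccontr)
      assume "w \<noteq> 0"
      then have "w /\<^sub>R norm w \<in> ?S" using that sub by (simp add: subspace_scale)
      then show False using True by blast
    qed
    have "Q w w \<le> - 1 * (norm w)^2" if "w \<in> W" for w
    proof -
      have "w = 0" using z that by blast
      then show ?thesis by (simp add: bilinear_lzero[OF Q])
    qed
    then show ?thesis by (intro exI[of _ 1]) auto
  next
    case False
    have "continuous_on ?S (\<lambda>w. Q w w)"
      by (intro bilinear_continuous_on_compose[OF continuous_on_id continuous_on_id Q])
    then obtain w0 where w0: "w0 \<in> ?S" "\<And>w. w \<in> ?S \<Longrightarrow> Q w w \<le> Q w0 w0"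
      using continuous_attains_sup[OF cS False] by blast
    have m: "Q w0 w0 < 0" using W w0(1) by (auto simp: negdef_def)
    have "Q w w \<le> - (- Q w0 w0) * (norm w)^2" if "w \<in> W" for w
    proof (cases "w = 0")
      case True then show ?thesis by (simp add: bilinear_lzero[OF Q])
    next
      case False
      have "w /\<^sub>R norm w \<in> ?S" using that sub False by (simp add: subspace_scale)
      then have "Q (w /\<^sub>R norm w) (w /\<^sub>R norm w) \<le> Q w0 w0" by (rule w0(2))
      then have "(norm w)^2 * Q (w /\<^sub>R norm w) (w /\<^sub>R norm w) \<le> (norm w)^2 * Q w0 w0"
        by (intro mult_left_mono) auto
      then show ?thesis using sc[OF False] by (simp add: mult.commute)
    qed
    then show ?thesis using m by (intro exI[of _ "- Q w0 w0"]) auto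
  qed
qed

lemma index_le_DIM:
  fixes q :: "'v::euclidean_space \<Rightarrow> 'v \<Rightarrow> real"
  shows "neg_index q + neg_index (\<lambda>u v. - q u v) \<le> DIM('v)"
proof -
  obtain W where W: "negdef q W" "dim W = neg_index q" using ni_facts(1) by blast
  obtain P where P: "negdef (\<lambda>u v. - q u v) P" "dim P = neg_index (\<lambda>u v. - q u v)" using ni_facts(1) by blast
  have sW: "subspace W" and sP: "subspace P" using W P by (auto simp: negdef_def)
  have "W \<inter> P \<subseteq> {0}" using W P by (force simp: negdef_def)
  then have d0: "dim (W \<inter> P) = 0" by (simp add: dim_eq_0)
  have d1: "dim {x + y |x y. x \<in> W \<and> y \<in> P} \<le> DIM('v)"
    using dim_subset_UNIV[of "{x + y |x y. x \<in> W \<and> y \<in> P}"] by simp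
  have d2: "dim {x + y |x y. x \<in> W \<and> y \<in> P} + dim (W \<inter> P) = dim W + dim P"
    by (rule dim_sums_Int[OF sW sP])
  show ?thesis using d0 d1 d2 W(2) P(2) by linarith
qed

lemma index_ge_DIM:
  fixes q :: "'v::euclidean_space \<Rightarrow> 'v \<Rightarrow> real"
  assumes Q: "bilinear q" and S: "sym_form q" and N: "nondegenerate q"
  shows "DIM('v) \<le> neg_index q + neg_index (\<lambda>u v. - q u v)"
proof -
  obtain W where W: "negdef q W" "dim W = neg_index q" using ni_facts(1) by blast
  have sW: "subspace W" using W by (simp add: negdef_def)
  have qs: "q u v = q v u" for u v using S by (simp add: sym_form_def)
  define R where "R w = (\<Sum>i\<in>Basis. q i w *\<^sub>R i)" for w :: 'v
  have lq1: "linear (\<lambda>p. q p w)" for w using Q by (simp add: bilinear_def)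
  have lq2: "linear (\<lambda>w. q p w)" for p using Q by (simp add: bilinear_def)
  have qR: "q p w = p \<bullet> R w" for p w
  proof -
    have "q p w = (\<Sum>i\<in>Basis. (p \<bullet> i) *\<^sub>R q i w)" using lin_expand[OF lq1[of w]] .
    then show ?thesis by (simp add: R_def inner_sum_right mult.commute)
  qed
  have lR: "linear R"
    unfolding R_def by (rule linearI) (simp_all add: bilinear_radd[OF Q] bilinear_rmul[OF Q] scaleR_add_left sum.distrib scaleR_sum_right)
  define P where "P = {p. \<forall>w\<in>W. q p w = 0}"
  have P_orth: "P = {y \<in> UNIV. \<forall>z \<in> R ` W. orthogonal z y}"
    by (auto simp: P_def orthogonal_def qR inner_commute)
  have sRW: "subspace (R ` W)" using linear_subspace_image[OF lR sW] .
  have "dim P + dim (R ` W) = DIM('v)"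
    unfolding P_orth using dim_subspace_orthogonal_to_vectors[OF sRW subspace_UNIV subset_UNIV] by simp
  moreover have "dim (R ` W) \<le> dim W" using dim_image_le[OF lR] .
  ultimately have dimP: "DIM('v) \<le> dim P + dim W" by simp
  have sP: "subspace P"
    unfolding P_def subspace_def
    by (auto simp: bilinear_lzero[OF Q] bilinear_ladd[OF Q] bilinear_lmul[OF Q])
  have WP0: "w = 0" if "w \<in> W" "w \<in> P" for w
    using that W(1) unfolding P_def negdef_def by force
  have psd: "q p p \<ge> 0" if p: "p \<in> P" for p
  proof (rule ccontr)
    assume neg: "\<not> q p p \<ge> 0"
    then have p0: "p \<noteq> 0" by (auto simp: bilinear_lzero[OF Q])
    have pW: "p \<notin> span W" using WP0[of p] p p0 span_eq_iff[THEN iffD2, OF sW] by blast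
    let ?W' = "span (insert p W)"
    have "negdef q ?W'"
      unfolding negdef_def
    proof (intro conjI ballI impI subspace_span)
      fix y assume y: "y \<in> ?W'" and y0: "y \<noteq> 0"
      obtain t where t: "y - t *\<^sub>R p \<in> span W" using y by (auto simp: span_insert)
      define w where "w = y - t *\<^sub>R p"
      have wW: "w \<in> W" using t sW by (simp add: w_def span_eq_iff[THEN iffD2, OF sW])
      have yw: "y = w + t *\<^sub>R p" by (simp add: w_def)
      have qwp: "q p w = 0" "q w p = 0" using p wW qs by (auto simp: P_def)
      have "q y y = q w w + t * t * q p p"
        unfolding yw by (simp add: bilinear_ladd[OF Q] bilinear_radd[OF Q] bilinear_lmul[OF Q] bilinear_rmul[OF Q] qwp)
      moreover have "q w w \<le> 0" using W(1) wW by (cases "w = 0") (auto simp: negdef_def bilinear_lzero[OF Q])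
      moreover have "t * t * q p p \<le> 0" using neg by (simp add: mult_nonneg_nonpos)
      moreover have "w \<noteq> 0 \<or> t \<noteq> 0" using y0 yw by auto
      moreover have "w \<noteq> 0 \<Longrightarrow> q w w < 0" using W(1) wW by (auto simp: negdef_def)
      moreover have "t \<noteq> 0 \<Longrightarrow> t * t * q p p < 0" using neg by (intro mult_pos_neg) (auto simp: not_le zero_less_mult_iff)
      ultimately show "q y y < 0" by linarith
    qed
    then have "dim ?W' \<le> neg_index q" by (rule ni_facts(2))
    moreover have "dim ?W' = dim W + 1" using pW by (simp add: dim_insert)
    ultimately show False using W(2) by simp
  qed
  have WP: "W \<inter> P \<subseteq> {0}" using WP0 by blast
  have full: "dim {x + y |x y. x \<in> W \<and> y \<in> P} = DIM('v)"
  proof -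
    have d0: "dim (W \<inter> P) = 0" using WP by (simp add: dim_eq_0)
    have d2: "dim {x + y |x y. x \<in> W \<and> y \<in> P} + dim (W \<inter> P) = dim W + dim P"
      by (rule dim_sums_Int[OF sW sP])
    have d1: "dim {x + y |x y. x \<in> W \<and> y \<in> P} \<le> DIM('v)"
      using dim_subset_UNIV[of "{x + y |x y. x \<in> W \<and> y \<in> P}"] by simp
    show ?thesis using d0 d1 d2 dimP by linarith
  qed
  have sWP: "subspace {x + y |x y. x \<in> W \<and> y \<in> P}" using subspace_sums[OF sW sP] by (simp add: set_plus_def)
  have allv: "\<exists>w p'. v = w + p' \<and> w \<in> W \<and> p' \<in> P" for v
  proof -
    have e1: "span {x + y |x y. x \<in> W \<and> y \<in> P} = UNIV"
      using full dim_eq_full[of "{x + y |x y. x \<in> W \<and> y \<in> P}"] by simp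
    have e2: "span {x + y |x y. x \<in> W \<and> y \<in> P} = {x + y |x y. x \<in> W \<and> y \<in> P}"
      by (rule span_eq_iff[THEN iffD2, OF sWP])
    have e3: "{x + y |x y. x \<in> W \<and> y \<in> P} = UNIV" using e1 unfolding e2 .
    have "v \<in> {x + y |x y. x \<in> W \<and> y \<in> P}" unfolding e3 by (rule UNIV_I)
    then show ?thesis by blast
  qed
  have pd: "q p p > 0" if p: "p \<in> P" and p0: "p \<noteq> 0" for p
  proof (rule ccontr)
    assume "\<not> q p p > 0"
    then have pp: "q p p = 0" using psd[OF p] by simp
    have cs: "q p p' = 0" if p': "p' \<in> P" for p'
    proof (rule ccontr)
      assume a0: "q p p' \<noteq> 0"
      define a where "a = q p p'"
      define c where "c = q p' p'"
      have c0: "c \<ge> 0" using psd[OF p'] by (simp add: c_def)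
      define sc where "sc = 1 / (c + 1)"
      have s0: "sc > 0" using c0 by (simp add: sc_def)
      have s1: "sc * c < 1" using c0 by (simp add: sc_def)
      define t where "t = - (sc * a)"
      have "p + t *\<^sub>R p' \<in> P" using sP p p' by (simp add: subspace_add subspace_scale)
      then have ge: "q (p + t *\<^sub>R p') (p + t *\<^sub>R p') \<ge> 0" by (rule psd)
      have "q (p + t *\<^sub>R p') (p + t *\<^sub>R p') = 2 * t * a + t * t * c"
        by (simp add: bilinear_ladd[OF Q] bilinear_radd[OF Q] bilinear_lmul[OF Q] bilinear_rmul[OF Q] pp a_def c_def qs[of p' p] algebra_simps)
      also have "\<dots> = (sc * (a * a)) * (sc * c - 2)"
        unfolding t_def by (simp add: algebra_simps)
      also have "\<dots> < 0"
      proof (rule mult_pos_neg)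
        have "a * a > 0" using a0 unfolding a_def by (metis not_real_square_gt_zero)
        then show "sc * (a * a) > 0" using s0 by simp
        show "sc * c - 2 < 0" using s1 by simp
      qed
      finally show False using ge by simp
    qed
    have "\<forall>v. q p v = 0"
    proof
      fix v obtain w p' where "v = w + p'" "w \<in> W" "p' \<in> P" using allv by blast
      moreover have "q p w = 0" using p \<open>w \<in> W\<close> by (simp add: P_def)
      ultimately show "q p v = 0" using cs by (simp add: bilinear_radd[OF Q])
    qed
    then show False using N p0 by (simp add: nondegenerate_def)
  qed
  have "negdef (\<lambda>u v. - q u v) P" using sP pd by (simp add: negdef_def)
  then have "dim P \<le> neg_index (\<lambda>u v. - q u v)" by (rule ni_facts(2))
  then show ?thesis using dimP W(2) by simp
qed

lemma bilinear_neg_form: "bilinear q \<Longrightarrow> bilinear (\<lambda>u v. - q u v)"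
  unfolding bilinear_def by (auto intro: linear_compose_neg)

lemma index_loc_const:
  fixes q :: "'v::euclidean_space \<Rightarrow> 'v \<Rightarrow> 'v \<Rightarrow> real"
  assumes x: "x \<in> U" and all: "\<And>y. y \<in> U \<Longrightarrow> bilinear (q y) \<and> sym_form (q y) \<and> nondegenerate (q y)"
    and cont: "\<And>e. e > 0 \<Longrightarrow> \<exists>d>0. \<forall>y. norm (y - x) < d \<longrightarrow> y \<in> U \<and> (\<forall>u v. \<bar>q y u v - q x u v\<bar> \<le> e * norm u * norm v)"
  shows "\<exists>e>0. \<forall>y\<in>U \<inter> ball x e. neg_index (q y) = neg_index (q x)"
proof -
  have Qx: "bilinear (q x)" "sym_form (q x)" "nondegenerate (q x)" using all[OF x] by auto
  obtain W where W: "negdef (q x) W" "dim W = neg_index (q x)" using ni_facts(1) by blast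
  obtain P where P: "negdef (\<lambda>u v. - q x u v) P" "dim P = neg_index (\<lambda>u v. - q x u v)" using ni_facts(1) by blast
  obtain c1 where c1: "c1 > 0" "\<And>w. w \<in> W \<Longrightarrow> q x w w \<le> - c1 * (norm w)^2"
    using negdef_uniform[OF Qx(1) W(1)] by blast
  obtain c2 where c2: "c2 > 0" "\<And>w. w \<in> P \<Longrightarrow> - q x w w \<le> - c2 * (norm w)^2"
    using negdef_uniform[OF bilinear_neg_form[OF Qx(1)] P(1)] by blast
  define e0 where "e0 = min c1 c2 / 2"
  have e0: "e0 > 0" using c1 c2 by (simp add: e0_def)
  obtain d where d: "d > 0" "\<And>y. norm (y - x) < d \<Longrightarrow> y \<in> U \<and> (\<forall>u v. \<bar>q y u v - q x u v\<bar> \<le> e0 * norm u * norm v)"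
    using cont[OF e0] by blast
  have "neg_index (q y) = neg_index (q x)" if y: "y \<in> U \<inter> ball x d" for y
  proof -
    have yd: "norm (y - x) < d" using y by (simp add: dist_norm norm_minus_commute)
    have cl: "\<bar>q y u u - q x u u\<bar> \<le> e0 * (norm u)^2" for u using d(2)[OF yd] by (simp add: power2_eq_square mult.assoc)
    have Wy: "negdef (q y) W" unfolding negdef_def
    proof (intro conjI ballI impI)
      show "subspace W" using W(1) by (simp add: negdef_def)
      fix w assume w: "w \<in> W" "w \<noteq> 0"
      have "q y w w \<le> q x w w + e0 * (norm w)^2" using cl[of w] by linarith
      also have "\<dots> \<le> - c1 * (norm w)^2 + (c1 / 2) * (norm w)^2"
        using c1(2)[OF w(1)] e0_def by (intro add_mono mult_right_mono) auto
      also have "\<dots> < 0" using w(2) c1(1) by simp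
      finally show "q y w w < 0" .
    qed
    have Py: "negdef (\<lambda>u v. - q y u v) P" unfolding negdef_def
    proof (intro conjI ballI impI)
      show "subspace P" using P(1) by (simp add: negdef_def)
      fix w assume w: "w \<in> P" "w \<noteq> 0"
      have "- q y w w \<le> - q x w w + e0 * (norm w)^2" using cl[of w] by linarith
      also have "\<dots> \<le> - c2 * (norm w)^2 + (c2 / 2) * (norm w)^2"
        using c2(2)[OF w(1)] e0_def by (intro add_mono mult_right_mono) auto
      also have "\<dots> < 0" using w(2) c2(1) by simp
      finally show "- q y w w < 0" .
    qed
    have Qy: "bilinear (q y)" "sym_form (q y)" "nondegenerate (q y)" using all y by auto
    have 1: "dim W \<le> neg_index (q y)" using ni_facts(2)[OF Wy] .
    have 2: "dim P \<le> neg_index (\<lambda>u v. - q y u v)" using ni_facts(2)[OF Py] .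
    have 3: "neg_index (q y) + neg_index (\<lambda>u v. - q y u v) \<le> DIM('v)" by (rule index_le_DIM)
    have 4: "DIM('v) \<le> neg_index (q x) + neg_index (\<lambda>u v. - q x u v)" by (rule index_ge_DIM[OF Qx])
    show ?thesis using 1 2 3 4 W(2) P(2) by linarith
  qed
  then show ?thesis using d(1) by blast
qed

context mj begin

lemma g_cont:
  assumes x: "x \<in> UJ" and e: "e > 0"
  shows "\<exists>d>0. \<forall>y. norm (y - x) < d \<longrightarrow> y \<in> UJ \<and> (\<forall>u v. \<bar>gJ b J y u v - gJ b J x u v\<bar> \<le> e * norm u * norm v)"
proof -
  obtain M d0 c where M: "M > 0" "d0 > 0" "c > 0" and
    H: "\<And>y. norm (y - x) < d0 \<Longrightarrow> y \<in> UJ \<and> (\<forall>w. norm (Gi y w) \<le> M * norm w)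
          \<and> (\<forall>u. norm (Gop J y u - Gop J x u) \<le> c * norm (y - x) * norm u)"
    using U_loc[OF x] by blast
  obtain B where B: "B > 0" "\<And>a v. norm (b a v) \<le> B * norm a * norm v" using bilinear_bounded_pos[OF bb] by blast
  define d where "d = min d0 (e / (B * c))"
  have d0: "d > 0" using M B e by (simp add: d_def)
  have "\<bar>gJ b J y u v - gJ b J x u v\<bar> \<le> e * norm u * norm v" if y: "norm (y - x) < d" for y u v
  proof -
    have yd: "norm (y - x) < d0" using y by (simp add: d_def)
    have "gJ b J y u v - gJ b J x u v = b (Gop J y u - Gop J x u) v" by (simp add: gJ_def b_sub1)
    then have "\<bar>gJ b J y u v - gJ b J x u v\<bar> \<le> B * norm (Gop J y u - Gop J x u) * norm v"
      using B(2) by (metis real_norm_def)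
    also have "\<dots> \<le> B * (c * norm (y - x) * norm u) * norm v"
      using H[OF yd] B by (intro mult_right_mono mult_left_mono) auto
    also have "\<dots> = (B * c * norm (y - x)) * norm u * norm v" by (simp add: mult_ac)
    also have "\<dots> \<le> (B * c * (e / (B * c))) * norm u * norm v"
      using y B M by (intro mult_right_mono mult_left_mono) (auto simp: d_def)
    also have "\<dots> = e * norm u * norm v" using B M by simp
    finally show ?thesis .
  qed
  then show ?thesis using d0 H by (auto simp: d_def intro!: exI[of _ d])
qed

lemma semi_riem: "semi_riemannian_on UJ (gJ b J)"
  unfolding semi_riemannian_on_def
proof (intro conjI ballI allI open_UJ smooth_g g_bil g_nondeg)
  fix x assume "x \<in> UJ"
  then show "sym_form (gJ b J x)" using g_sym by (simp add: sym_form_def)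
next
  fix x assume x: "x \<in> UJ"
  show "\<exists>e>0. \<forall>y\<in>UJ \<inter> ball x e. neg_index (gJ b J y) = neg_index (gJ b J x)"
  proof (rule index_loc_const[OF x])
    fix y assume "y \<in> UJ"
    then show "bilinear (gJ b J y) \<and> sym_form (gJ b J y) \<and> nondegenerate (gJ b J y)"
      using g_bil g_nondeg g_sym by (simp add: sym_form_def)
  next
    fix e :: real assume "e > 0"
    then show "\<exists>d>0. \<forall>y. norm (y - x) < d \<longrightarrow> y \<in> UJ \<and> (\<forall>u v. \<bar>gJ b J y u v - gJ b J x u v\<bar> \<le> e * norm u * norm v)"
      using g_cont[OF x] by blast
  qed
qed

end

lemma line_deriv:
  assumes "(g has_derivative g') (at (p0 + s *\<^sub>R a))"
  shows "DERIV (\<lambda>s. g (p0 + s *\<^sub>R a)) s :> g' a"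
proof -
  have l: "linear g'" using assms has_derivative_linear by blast
  have i: "((\<lambda>s. p0 + s *\<^sub>R a) has_derivative (\<lambda>h. h *\<^sub>R a)) (at s)"
    by (intro derivative_eq_intros) auto
  have "((\<lambda>s. g (p0 + s *\<^sub>R a)) has_derivative (\<lambda>h. g' (h *\<^sub>R a))) (at s)"
    using has_derivative_compose[OF i assms] .
  moreover have "(\<lambda>h. g' (h *\<^sub>R a)) = (*) (g' a)"
    using linear_scale[OF l] by (auto simp: fun_eq_iff mult.commute)
  ultimately show ?thesis by (simp add: has_field_derivative_def)
qed

lemma double_mvt:
  fixes g :: "'a::real_normed_vector \<Rightarrow> real"
  assumes t: "t > 0" and inU: "\<And>s r. 0 \<le> s \<Longrightarrow> s \<le> t \<Longrightarrow> 0 \<le> r \<Longrightarrow> r \<le> t \<Longrightarrow> x + s *\<^sub>R a + r *\<^sub>R c \<in> U"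
    and D1: "\<And>y. y \<in> U \<Longrightarrow> (g has_derivative gd y) (at y)"
    and D2: "\<And>y. y \<in> U \<Longrightarrow> ((\<lambda>y. gd y a) has_derivative Ha y) (at y)"
  shows "\<exists>s r. 0 < s \<and> s < t \<and> 0 < r \<and> r < t \<and>
     g (x + t *\<^sub>R a + t *\<^sub>R c) - g (x + t *\<^sub>R a) - g (x + t *\<^sub>R c) + g x = t * t * Ha (x + s *\<^sub>R a + r *\<^sub>R c) c"
proof -
  define phi where "phi s = g ((x + t *\<^sub>R c) + s *\<^sub>R a) - g (x + s *\<^sub>R a)" for s
  have Dphi: "DERIV phi s :> gd ((x + t *\<^sub>R c) + s *\<^sub>R a) a - gd (x + s *\<^sub>R a) a" if "0 \<le> s" "s \<le> t" for s
  proof -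
    have u1: "(x + t *\<^sub>R c) + s *\<^sub>R a \<in> U" using inU[of s t] that t by (simp add: add_ac)
    have u2: "x + s *\<^sub>R a \<in> U" using inU[of s 0] that t by simp
    show ?thesis unfolding phi_def
      by (intro DERIV_diff line_deriv D1 u1 u2)
  qed
  obtain s where s: "0 < s" "s < t" and
    es: "phi t - phi 0 = (t - 0) * (gd ((x + t *\<^sub>R c) + s *\<^sub>R a) a - gd (x + s *\<^sub>R a) a)"
    using MVT2[OF t Dphi] by blast
  define psi where "psi r = gd ((x + s *\<^sub>R a) + r *\<^sub>R c) a" for r
  have Dpsi: "DERIV psi r :> Ha ((x + s *\<^sub>R a) + r *\<^sub>R c) c" if "0 \<le> r" "r \<le> t" for r
  proof -
    have u: "(x + s *\<^sub>R a) + r *\<^sub>R c \<in> U" using inU[of s r] that s by simp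
    show ?thesis unfolding psi_def by (rule line_deriv[OF D2[OF u]])
  qed
  obtain r where r: "0 < r" "r < t" and
    er: "psi t - psi 0 = (t - 0) * Ha ((x + s *\<^sub>R a) + r *\<^sub>R c) c"
    using MVT2[OF t Dpsi] by blast
  have "g (x + t *\<^sub>R a + t *\<^sub>R c) - g (x + t *\<^sub>R a) - g (x + t *\<^sub>R c) + g x = phi t - phi 0"
    by (simp add: phi_def add_ac)
  also have "\<dots> = t * (psi t - psi 0)" using es by (simp add: psi_def add_ac)
  also have "\<dots> = t * t * Ha (x + s *\<^sub>R a + r *\<^sub>R c) c" using er by simp
  finally show ?thesis using s r by blast
qed

lemma schwarz_scalar:
  fixes g :: "'a::real_normed_vector \<Rightarrow> real"
  assumes U: "open U" and x: "x \<in> U"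
    and D1: "\<And>y. y \<in> U \<Longrightarrow> (g has_derivative gd y) (at y)"
    and Da: "\<And>y. y \<in> U \<Longrightarrow> ((\<lambda>y. gd y a) has_derivative Ha y) (at y)"
    and Dc: "\<And>y. y \<in> U \<Longrightarrow> ((\<lambda>y. gd y c) has_derivative Hc y) (at y)"
    and Ca: "isCont (\<lambda>y. Ha y c) x" and Cc: "isCont (\<lambda>y. Hc y a) x"
  shows "Ha x c = Hc x a"
proof (rule ccontr)
  assume ne: "Ha x c \<noteq> Hc x a"
  define \<delta> where "\<delta> = \<bar>Ha x c - Hc x a\<bar>"
  have d0: "\<delta> > 0" using ne by (simp add: \<delta>_def)
  obtain e1 where e1: "e1 > 0" "\<And>y. dist y x < e1 \<Longrightarrow> dist (Ha y c) (Ha x c) < \<delta>/2"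
    using Ca d0 unfolding continuous_at_eps_delta by (metis half_gt_zero)
  obtain e2 where e2: "e2 > 0" "\<And>y. dist y x < e2 \<Longrightarrow> dist (Hc y a) (Hc x a) < \<delta>/2"
    using Cc d0 unfolding continuous_at_eps_delta by (metis half_gt_zero)
  obtain e3 where e3: "e3 > 0" "ball x e3 \<subseteq> U" using U x open_contains_ball by blast
  define \<eta> where "\<eta> = min e1 (min e2 e3)"
  have eta: "\<eta> > 0" using e1 e2 e3 by (simp add: \<eta>_def)
  define t where "t = \<eta> / (2 * (norm a + norm c + 1))"
  have t0: "t > 0" using eta by (simp add: t_def add_nonneg_pos)
  have near: "norm (s *\<^sub>R a + r *\<^sub>R c) < \<eta>" if "0 \<le> s" "s \<le> t" "0 \<le> r" "r \<le> t" for s r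
  proof -
    have "norm (s *\<^sub>R a + r *\<^sub>R c) \<le> s * norm a + r * norm c"
      using norm_triangle_ineq[of "s *\<^sub>R a" "r *\<^sub>R c"] that by simp
    also have "\<dots> \<le> t * norm a + t * norm c" using that by (intro add_mono mult_right_mono) auto
    also have "\<dots> < t * (2 * (norm a + norm c + 1))"
    proof -
      have "0 \<le> t * norm a" "0 \<le> t * norm c" using t0 by simp_all
      moreover have "t * (2 * (norm a + norm c + 1)) = 2 * (t * norm a) + 2 * (t * norm c) + 2 * t"
        by (simp add: algebra_simps)
      ultimately show ?thesis using t0 by linarith
    qed
    also have "\<dots> = \<eta>"
    proof -
      have "2 * (norm a + norm c + 1) > 0" by (simp add: add_nonneg_pos)
      then show ?thesis unfolding t_def by simp
    qed
    finally show ?thesis .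
  qed
  have inU: "x + s *\<^sub>R a + r *\<^sub>R c \<in> U" if "0 \<le> s" "s \<le> t" "0 \<le> r" "r \<le> t" for s r
  proof -
    have "dist (x + s *\<^sub>R a + r *\<^sub>R c) x < e3"
      using near[OF that] by (simp add: dist_norm \<eta>_def add.assoc)
    then show ?thesis using e3(2) by (auto simp: dist_commute)
  qed
  have inU': "x + s *\<^sub>R c + r *\<^sub>R a \<in> U" if "0 \<le> s" "s \<le> t" "0 \<le> r" "r \<le> t" for s r
    using inU[OF that(3,4,1,2)] by (simp add: add_ac)
  obtain s1 r1 where sr1: "0 < s1" "s1 < t" "0 < r1" "r1 < t" and
    E1: "g (x + t *\<^sub>R a + t *\<^sub>R c) - g (x + t *\<^sub>R a) - g (x + t *\<^sub>R c) + g x = t * t * Ha (x + s1 *\<^sub>R a + r1 *\<^sub>R c) c"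
    using double_mvt[OF t0 inU D1 Da] by blast
  obtain s2 r2 where sr2: "0 < s2" "s2 < t" "0 < r2" "r2 < t" and
    E2: "g (x + t *\<^sub>R c + t *\<^sub>R a) - g (x + t *\<^sub>R c) - g (x + t *\<^sub>R a) + g x = t * t * Hc (x + s2 *\<^sub>R c + r2 *\<^sub>R a) a"
    using double_mvt[OF t0 inU' D1 Dc] by blast
  have "t * t * Ha (x + s1 *\<^sub>R a + r1 *\<^sub>R c) c = t * t * Hc (x + s2 *\<^sub>R c + r2 *\<^sub>R a) a"
  proof -
    have e: "x + t *\<^sub>R a + t *\<^sub>R c = x + t *\<^sub>R c + t *\<^sub>R a" by (simp add: add_ac)
    show ?thesis using E1[unfolded e] E2 by linarith
  qed
  then have eq: "Ha (x + s1 *\<^sub>R a + r1 *\<^sub>R c) c = Hc (x + s2 *\<^sub>R c + r2 *\<^sub>R a) a" using t0 by simp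
  have p1: "dist (x + s1 *\<^sub>R a + r1 *\<^sub>R c) x < e1"
    using near[of s1 r1] sr1 by (simp add: dist_norm \<eta>_def add.assoc)
  have p2: "dist (x + s2 *\<^sub>R c + r2 *\<^sub>R a) x < e2"
    using near[of r2 s2] sr2 by (simp add: dist_norm \<eta>_def add_ac)
  have "\<bar>Ha x c - Hc x a\<bar> < \<delta>/2 + \<delta>/2"
    using e1(2)[OF p1] e2(2)[OF p2] eq unfolding dist_real_def by linarith
  then show False by (simp add: \<delta>_def)
qed

lemma schwarz_vec:
  fixes f :: "'a::real_normed_vector \<Rightarrow> 'b::euclidean_space"
  assumes U: "open U" and x: "x \<in> U" and f2: "Ck_on 2 U f"
  shows "frechet_derivative (\<lambda>y. frechet_derivative f (at y) a) (at x) c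
       = frechet_derivative (\<lambda>y. frechet_derivative f (at y) c) (at x) a"
proof (rule euclidean_eqI)
  fix k :: 'b assume k: "k \<in> Basis"
  have f1: "Ck_on 1 U (\<lambda>y. frechet_derivative f (at y) h)" for h using f2 by (simp add: numeral_2_eq_2)
  have f0: "continuous_on U (\<lambda>y. frechet_derivative (\<lambda>y. frechet_derivative f (at y) h) (at y) h')" for h h'
    using f1[of h] by simp
  have df: "\<And>y. y \<in> U \<Longrightarrow> (f has_derivative frechet_derivative f (at y)) (at y)"
    using Ck_diff[of 1 U f] f2 U by (simp add: numeral_2_eq_2)
  have dfh: "\<And>y. y \<in> U \<Longrightarrow> ((\<lambda>y. frechet_derivative f (at y) h) has_derivative
      frechet_derivative (\<lambda>y. frechet_derivative f (at y) h) (at y)) (at y)" for h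
    using Ck_diff[of 0 U "\<lambda>y. frechet_derivative f (at y) h"] f1 U by simp
  have ct: "isCont (\<lambda>y. frechet_derivative (\<lambda>y. frechet_derivative f (at y) h) (at y) h' \<bullet> k) x" for h h'
    using f0[of h h'] U x by (simp add: continuous_on_eq_continuous_at continuous_intros)
  show "frechet_derivative (\<lambda>y. frechet_derivative f (at y) a) (at x) c \<bullet> k =
        frechet_derivative (\<lambda>y. frechet_derivative f (at y) c) (at x) a \<bullet> k"
  proof (rule schwarz_scalar[OF U x, where g="\<lambda>y. f y \<bullet> k" and gd="\<lambda>y h. frechet_derivative f (at y) h \<bullet> k"
        and Ha="\<lambda>y h. frechet_derivative (\<lambda>y. frechet_derivative f (at y) a) (at y) h \<bullet> k"
        and Hc="\<lambda>y h. frechet_derivative (\<lambda>y. frechet_derivative f (at y) c) (at y) h \<bullet> k"])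
    fix y assume y: "y \<in> U"
    show "((\<lambda>y. f y \<bullet> k) has_derivative (\<lambda>h. frechet_derivative f (at y) h \<bullet> k)) (at y)"
      by (rule has_derivative_inner_left[OF df[OF y]])
    show "((\<lambda>y. frechet_derivative f (at y) a \<bullet> k) has_derivative
        (\<lambda>h. frechet_derivative (\<lambda>y. frechet_derivative f (at y) a) (at y) h \<bullet> k)) (at y)"
      by (rule has_derivative_inner_left[OF dfh[OF y]])
    show "((\<lambda>y. frechet_derivative f (at y) c \<bullet> k) has_derivative
        (\<lambda>h. frechet_derivative (\<lambda>y. frechet_derivative f (at y) c) (at y) h \<bullet> k)) (at y)"
      by (rule has_derivative_inner_left[OF dfh[OF y]])
  qed (rule ct)+
qed

lemma aux1: "A + A + A = (3::real) *\<^sub>R (A::'a::real_vector)"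
proof -
  have "(3::real) *\<^sub>R A = (1 + 1 + 1) *\<^sub>R A" by simp
  also have "\<dots> = A + A + A" by (simp only: scaleR_add_left scaleR_one)
  finally show ?thesis by simp
qed

lemma aux2: "A + B + C = 0 \<Longrightarrow> (1/3) *\<^sub>R (A + A - C - B) = (A::'a::real_vector)"
proof -
  assume h: "A + B + C = 0"
  have "C = - A - B" using h by (metis add.commute add_diff_cancel_left' diff_0 diff_diff_eq eq_neg_iff_add_eq_0 minus_diff_eq)
  then have "A + A - C - B = A + A + A" by simp
  then show ?thesis by (simp add: aux1)
qed

lemma sum_sym_H:
  fixes H :: "'v::euclidean_space \<Rightarrow> 'v \<Rightarrow> 'w::real_vector"
  assumes lin: "\<And>i. i \<in> Basis \<Longrightarrow> linear (H i)" and sym: "\<And>i j. i \<in> Basis \<Longrightarrow> j \<in> Basis \<Longrightarrow> H i j = H j i"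
  shows "(\<Sum>i\<in>Basis. (p \<bullet> i) *\<^sub>R H i q) = (\<Sum>i\<in>Basis. (q \<bullet> i) *\<^sub>R H i p)"
proof -
  have "(\<Sum>i\<in>Basis. (p \<bullet> i) *\<^sub>R H i q) = (\<Sum>i\<in>Basis. \<Sum>j\<in>Basis. ((p \<bullet> i) * (q \<bullet> j)) *\<^sub>R H i j)"
    by (intro sum.cong refl) (simp add: lin_expand[OF lin, of _ q] scaleR_sum_right)
  also have "\<dots> = (\<Sum>j\<in>Basis. \<Sum>i\<in>Basis. ((p \<bullet> i) * (q \<bullet> j)) *\<^sub>R H i j)"
    by (rule sum.swap)
  also have "\<dots> = (\<Sum>j\<in>Basis. \<Sum>i\<in>Basis. ((q \<bullet> j) * (p \<bullet> i)) *\<^sub>R H j i)"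
    by (intro sum.cong refl) (simp add: sym mult.commute)
  also have "\<dots> = (\<Sum>i\<in>Basis. (q \<bullet> i) *\<^sub>R H i p)"
    by (intro sum.cong refl) (simp add: lin_expand[OF lin, of _ p] scaleR_sum_right)
  finally show ?thesis .
qed

context mj begin

lemma nabla0: "nablaJ J X Y 0 = Dflat X Y 0"
  by (simp add: nablaJ_def Gi_zero)

lemma D_nabla0:
  assumes v: "v \<in> vfields UJ" and w: "w \<in> vfields UJ"
  shows "frechet_derivative (nablaJ J v w) (at 0) h =
     frechet_derivative w (at 0) (frechet_derivative v (at 0) h)
     + (\<Sum>i\<in>Basis. (v 0 \<bullet> i) *\<^sub>R frechet_derivative (\<lambda>y. frechet_derivative w (at y) i) (at 0) h)
     + (2/3) *\<^sub>R J (v 0) (w 0) h"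
proof -
  have vs: "\<And>n. Ck_on n UJ v" and ws: "\<And>n. Ck_on n UJ w" using v w by (auto simp: vfields_def smooth_Ck)
  have dv: "(v has_derivative frechet_derivative v (at 0)) (at 0)" using Ck_diff[OF vs open_UJ zero_UJ] .
  have dw: "(w has_derivative frechet_derivative w (at 0)) (at 0)" using Ck_diff[OF ws open_UJ zero_UJ] .
  have dW: "((\<lambda>y. frechet_derivative w (at y) i) has_derivative
      frechet_derivative (\<lambda>y. frechet_derivative w (at y) i) (at 0)) (at 0)" for i
    using Ck_diff[of 0 UJ "\<lambda>y. frechet_derivative w (at y) i"] ws[of 2] open_UJ zero_UJ by (simp add: numeral_2_eq_2)
  define E where "E y = (\<Sum>i\<in>Basis. (v y \<bullet> i) *\<^sub>R frechet_derivative w (at y) i)" for y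
  have dE: "(E has_derivative (\<lambda>h. \<Sum>i\<in>Basis. (v 0 \<bullet> i) *\<^sub>R frechet_derivative (\<lambda>y. frechet_derivative w (at y) i) (at 0) h
        + (frechet_derivative v (at 0) h \<bullet> i) *\<^sub>R frechet_derivative w (at 0) i)) (at 0)"
    unfolding E_def by (intro has_derivative_sum has_derivative_scaleR has_derivative_inner_left dv dW)
  define z where "z y = J (v y) (w y) y" for y
  have dz: "(z has_derivative (\<lambda>h. J (frechet_derivative v (at 0) h) (w 0) 0 + J (v 0) (frechet_derivative w (at 0) h) 0 + J (v 0) (w 0) h)) (at 0)"
    unfolding z_def by (rule J_deriv[OF dv dw has_derivative_ident])
  have dG: "((\<lambda>y. Gi y (z y)) has_derivative (\<lambda>h. J (v 0) (w 0) h)) (at 0)"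
    using Gi_deriv[OF zero_UJ dz] by (simp add: Gi_zero)
  have dN: "((\<lambda>y. E y + (2/3) *\<^sub>R Gi y (z y)) has_derivative
     (\<lambda>h. (\<Sum>i\<in>Basis. (v 0 \<bullet> i) *\<^sub>R frechet_derivative (\<lambda>y. frechet_derivative w (at y) i) (at 0) h
        + (frechet_derivative v (at 0) h \<bullet> i) *\<^sub>R frechet_derivative w (at 0) i) + (2/3) *\<^sub>R J (v 0) (w 0) h)) (at 0)"
    by (intro has_derivative_add dE has_derivative_scaleR_right dG)
  have eqN: "E y + (2/3) *\<^sub>R Gi y (z y) = nablaJ J v w y" if y: "y \<in> UJ" for y
  proof -
    have "(w has_derivative frechet_derivative w (at y)) (at y)" using Ck_diff[OF ws open_UJ y] .
    then show ?thesis unfolding nablaJ_def E_def z_def using Dflat_expand by metis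
  qed
  have dN2: "(nablaJ J v w has_derivative
     (\<lambda>h. (\<Sum>i\<in>Basis. (v 0 \<bullet> i) *\<^sub>R frechet_derivative (\<lambda>y. frechet_derivative w (at y) i) (at 0) h
        + (frechet_derivative v (at 0) h \<bullet> i) *\<^sub>R frechet_derivative w (at 0) i) + (2/3) *\<^sub>R J (v 0) (w 0) h)) (at 0)"
    using has_derivative_transform_within_open[OF dN open_UJ zero_UJ eqN] .
  have lw: "linear (frechet_derivative w (at 0))" using dw has_derivative_linear by blast
  show ?thesis
    unfolding fd_apply[OF dN2] sum.distrib lin_expand[OF lw, of "frechet_derivative v (at 0) h"]
    by (simp add: algebra_simps)
qed

lemma curv0:
  assumes u: "u \<in> vfields UJ" and v: "v \<in> vfields UJ" and w: "w \<in> vfields UJ"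
  shows "curv (nablaJ J) u v w 0 = R_J J (u 0) (v 0) (w 0)"
proof -
  have ws: "\<And>n. Ck_on n UJ w" using w by (auto simp: vfields_def smooth_Ck)
  define H where "H a c = frechet_derivative (\<lambda>y. frechet_derivative w (at y) a) (at 0) c" for a c
  have linH: "linear (H i)" for i
  proof -
    have "((\<lambda>y. frechet_derivative w (at y) i) has_derivative H i) (at 0)"
      using Ck_diff[of 0 UJ "\<lambda>y. frechet_derivative w (at y) i"] ws[of 2] open_UJ zero_UJ
      by (simp add: numeral_2_eq_2 H_def[abs_def])
    then show ?thesis using has_derivative_linear by blast
  qed
  have symH: "H i j = H j i" for i j
    unfolding H_def using schwarz_vec[OF open_UJ zero_UJ ws[of 2]] .
  have S: "(\<Sum>i\<in>Basis. (v 0 \<bullet> i) *\<^sub>R H i (u 0)) = (\<Sum>i\<in>Basis. (u 0 \<bullet> i) *\<^sub>R H i (v 0))"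
    by (rule sum_sym_H[OF linH symH])
  have dw: "(w has_derivative frechet_derivative w (at 0)) (at 0)" using Ck_diff[OF ws open_UJ zero_UJ] .
  have lw: "linear (frechet_derivative w (at 0))" using dw has_derivative_linear by blast
  have "curv (nablaJ J) u v w 0 = Dflat u (nablaJ J v w) 0 - Dflat v (nablaJ J u w) 0 - Dflat (lie u v) w 0"
    by (simp add: curv_def nabla0)
  also have "\<dots> = (2/3) *\<^sub>R (J (v 0) (w 0) (u 0) - J (u 0) (w 0) (v 0))"
    unfolding Dflat_def Dir_def D_nabla0[OF v w] D_nabla0[OF u w] H_def[symmetric] S
    by (simp add: lie_def Dflat_def Dir_def linear_diff[OF lw] algebra_simps)
  also have "\<dots> = R_J J (u 0) (v 0) (w 0)"
    by (simp add: R_J_def J_sym[of "w 0"])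
  finally show ?thesis .
qed

lemma jacobi0:
  assumes u: "u \<in> vfields UJ" and v: "v \<in> vfields UJ" and w: "w \<in> vfields UJ"
  shows "jacobi_op (nablaJ J) u v w 0 = J (u 0) (v 0) (w 0)"
proof -
  have "jacobi_op (nablaJ J) u v w 0 = (1/2) *\<^sub>R (R_J J (w 0) (v 0) (u 0) + R_J J (w 0) (u 0) (v 0))"
    by (simp add: jacobi_op_def curv0[OF w v u] curv0[OF w u v])
  also have "\<dots> = (1/3) *\<^sub>R (J (u 0) (v 0) (w 0) + J (v 0) (u 0) (w 0) - J (u 0) (w 0) (v 0) - J (v 0) (w 0) (u 0))"
    by (simp add: R_J_def algebra_simps)
  also have "\<dots> = J (u 0) (v 0) (w 0)"
  proof -
    have b: "J (u 0) (v 0) (w 0) + J (v 0) (w 0) (u 0) + J (w 0) (u 0) (v 0) = 0" by (rule J_bianchi)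
    have s1: "J (v 0) (u 0) = J (u 0) (v 0)" and s2: "J (w 0) (u 0) = J (u 0) (w 0)" using J_sym by simp_all
    show ?thesis unfolding s1 using aux2[OF b[unfolded s2]] .
  qed
  finally show ?thesis .
qed

end

theorem mainTheorem18:
  fixes b :: "'v::euclidean_space \<Rightarrow> 'v \<Rightarrow> real"
    and J :: "'v \<Rightarrow> 'v \<Rightarrow> 'v \<Rightarrow> 'v"
  assumes "bilinear b" and "sym_form b" and "nondegenerate b"
    and "metric_jacobi b J"
  shows "open (U_J J) \<and> 0 \<in> U_J J
    \<and> semi_riemannian_on (U_J J) (gJ b J)
    \<and> gJ b J 0 = b
    \<and> levi_civita (U_J J) (gJ b J) (nablaJ J)
    \<and> (\<forall>nabla. levi_civita (U_J J) (gJ b J) nabla \<longrightarrow>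
          (\<forall>u\<in>vfields (U_J J). \<forall>v\<in>vfields (U_J J). \<forall>x\<in>U_J J. nabla u v x = nablaJ J u v x))
    \<and> (\<forall>u\<in>vfields (U_J J). \<forall>v\<in>vfields (U_J J). \<forall>w\<in>vfields (U_J J).
          curv (nablaJ J) u v w 0 = R_J J (u 0) (v 0) (w 0)
        \<and> jacobi_op (nablaJ J) u v w 0 = J (u 0) (v 0) (w 0))"
proof -
  interpret mj b J using assms by (unfold_locales)
  show ?thesis
    using open_UJ zero_UJ semi_riem g_zero levi unique curv0 jacobi0 by blast
qed

end
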